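(* Let $q, k \in \mathbb{N}$ with $1 < q < \frac{k}{4}$. Let $D_1, \dots, D_q \in \mathbb{N}$ satisfy $$D_q(k - 4q) > 1 + \xi q(q-1) + 5\binom{k-q}{2}, \qquad \text{where } \xi = \max_{1 \leq j < q}\{D_j - D_{j+1}\}.$$ If there exists an $(a_1, \dots, a_q)$-flip graph $F$ (with a witnessing colouring) such that $e_j^F[v] = D_j$ for every $v \in V(F)$ and every $1 \leq j \leq q$, then for every $N \in \mathbb{N}$ there exists an $(a_1, \dots, a_k)$-flip graph for some $a_{q+1}, \dots, a_k \in \mathbb{N}$ with $a_k > N$.
   Context: For a graph $G$ with an edge-colouring $f\colon E(G)\to\{1,\dots,k\}$ and $1\le j\le k$: $e^G_j[v]$ is the number of edges coloured $j$ in the subgraph of $G$ induced by the closed neighbourhood $N[v]$ of $v$, and $\deg_j(v)$ is the number of edges coloured $j$ incident to $v$. Given a strictly increasing sequence of positive integers $(a_1,\dots,a_k)$, a $d$-regular graph $G$ with $d=\sum_j a_j$ is an $(a_1,\dots,a_k)$-flip graph if there is an edge-colouring with colours $\{1,\dots,k\}$ such that $\deg_j(v)=a_j$ for all vertices $v$ and all $j$, and $e_k[v]<e_{k-1}[v]<\dots<e_1[v]$ for every vertex $v$. *)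

theory Defs
  imports Main
begin

definition simple_graph :: "'a set \<Rightarrow> 'a set set \<Rightarrow> bool" where
  "simple_graph V E \<longleftrightarrow> finite V \<and>
     (\<forall>e\<in>E. \<exists>u v. u \<noteq> v \<and> u \<in> V \<and> v \<in> V \<and> e = {u, v})"

definition closed_nbhd :: "'a set set \<Rightarrow> 'a \<Rightarrow> 'a set" where
  "closed_nbhd E v = insert v {u. {u, v} \<in> E}"

definition deg_col :: "'a set set \<Rightarrow> ('a set \<Rightarrow> nat) \<Rightarrow> nat \<Rightarrow> 'a \<Rightarrow> nat" where
  "deg_col E c j v = card {e \<in> E. v \<in> e \<and> c e = j}"

definition e_col :: "'a set set \<Rightarrow> ('a set \<Rightarrow> nat) \<Rightarrow> nat \<Rightarrow> 'a \<Rightarrow> nat" where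
  "e_col E c j v = card {e \<in> E. e \<subseteq> closed_nbhd E v \<and> c e = j}"

definition flip_graph ::
  "'a set \<Rightarrow> 'a set set \<Rightarrow> ('a set \<Rightarrow> nat) \<Rightarrow> nat \<Rightarrow> (nat \<Rightarrow> nat) \<Rightarrow> bool" where
  "flip_graph V E c k a \<longleftrightarrow>
     simple_graph V E \<and> V \<noteq> {} \<and>
     (\<forall>j\<in>{1..k}. 0 < a j) \<and>
     (\<forall>i j. 1 \<le> i \<and> i < j \<and> j \<le> k \<longrightarrow> a i < a j) \<and>
     (\<forall>e\<in>E. c e \<in> {1..k}) \<and>
     (\<forall>v\<in>V. card {e \<in> E. v \<in> e} = (\<Sum>j=1..k. a j)) \<and>
     (\<forall>v\<in>V. \<forall>j\<in>{1..k}. deg_col E c j v = a j) \<and>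
     (\<forall>v\<in>V. \<forall>j. 1 \<le> j \<and> j < k \<longrightarrow> e_col E c (Suc j) v < e_col E c j v)"

end

theory Submission
  imports Defs
begin


lemma sg_finE: "simple_graph V E \<Longrightarrow> finite E"
proof -
  assume a: "simple_graph V E"
  have "E \<subseteq> Pow V"
  proof
    fix e assume "e \<in> E"
    then obtain u v where "u \<in> V" "v \<in> V" "e = {u,v}" using a unfolding simple_graph_def by meson
    thus "e \<in> Pow V" by simp
  qed
  moreover have "finite V" using a unfolding simple_graph_def by blast
  ultimately show ?thesis by (meson finite_Pow_iff finite_subset)
qed

lemma sg_edge: "simple_graph V E \<Longrightarrow> e \<in> E \<Longrightarrow> \<exists>u v. u \<noteq> v \<and> u \<in> V \<and> v \<in> V \<and> e = {u, v}"
  unfolding simple_graph_def by blast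

lemma sg_noloop: "simple_graph V E \<Longrightarrow> {u, v} \<in> E \<Longrightarrow> u \<noteq> v"
  unfolding simple_graph_def by (metis doubleton_eq_iff)

lemma sg_vert: "simple_graph V E \<Longrightarrow> {u, v} \<in> E \<Longrightarrow> u \<in> V \<and> v \<in> V"
  unfolding simple_graph_def by (metis doubleton_eq_iff)

lemma deg_nbrs:
  assumes "simple_graph V E"
  shows "card {e\<in>E. v\<in>e \<and> P e} = card {u. {u,v}\<in>E \<and> P {u,v}}"
proof -
  have "bij_betw (\<lambda>u. {u,v}) {u. {u,v}\<in>E \<and> P {u,v}} {e\<in>E. v\<in>e \<and> P e}"
  proof (rule bij_betwI')
    fix x y assume "x \<in> {u. {u,v}\<in>E \<and> P {u,v}}" "y \<in> {u. {u,v}\<in>E \<and> P {u,v}}"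
    show "({x, v} = {y, v}) = (x = y)" by (metis doubleton_eq_iff)
  next
    fix x assume "x \<in> {u. {u,v}\<in>E \<and> P {u,v}}" thus "{x, v} \<in> {e \<in> E. v \<in> e \<and> P e}" by auto
  next
    fix e assume e: "e \<in> {e \<in> E. v \<in> e \<and> P e}"
    then obtain a b where "e = {a,b}" using sg_edge[OF assms] by blast
    show "\<exists>x\<in>{u. {u, v} \<in> E \<and> P {u, v}}. e = {x, v}"
    proof (cases "v = a")
      case True
      hence "e = {b, v}" using \<open>e = {a,b}\<close> by (simp add: insert_commute)
      thus ?thesis using e by blast
    next
      case False
      hence "v = b" using e \<open>e = {a,b}\<close> by simp
      hence "e = {a, v}" using \<open>e = {a,b}\<close> by simp
      thus ?thesis using e by blast
    qed
  qed
  from bij_betw_same_card[OF this] show ?thesis by (rule sym)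
qed

lemma ord_pairs:
  assumes "simple_graph V E"
  shows "card {(u,w). u\<in>S \<and> w\<in>S \<and> {u,w}\<in>E \<and> P {u,w}} = 2 * card {e\<in>E. e\<subseteq>S \<and> P e}"
proof -
  let ?A = "{e\<in>E. e\<subseteq>S \<and> P e}"
  let ?F = "\<lambda>e. {(u,w). u \<noteq> w \<and> {u,w} = e}"
  have fA: "finite ?A" using sg_finE[OF assms] by simp
  have eq: "{(u,w). u\<in>S \<and> w\<in>S \<and> {u,w}\<in>E \<and> P {u,w}} = \<Union> (?F ` ?A)"
    using sg_noloop[OF assms] by auto
  have c2: "card (?F e) = 2" if "e \<in> ?A" for e
  proof -
    obtain a b where ab: "a \<noteq> b" "e = {a,b}" using sg_edge[OF assms] \<open>e\<in>?A\<close> by blast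
    have "?F e = {(a,b),(b,a)}" using ab by (auto simp: doubleton_eq_iff)
    thus ?thesis using ab by simp
  qed
  have fin: "\<forall>e\<in>?A. finite (?F e)"
  proof
    fix e assume "e \<in> ?A"
    show "finite (?F e)"
    proof (rule ccontr)
      assume "infinite (?F e)"
      hence "card (?F e) = 0" by simp
      thus False using c2[OF \<open>e \<in> ?A\<close>] by simp
    qed
  qed
  have "card (\<Union> (?F ` ?A)) = (\<Sum>e\<in>?A. card (?F e))"
    by (rule card_UN_disjoint[OF fA fin]) auto
  also have "\<dots> = 2 * card ?A" using c2 by simp
  finally show ?thesis using eq by simp
qed

lemma card_colour_sum:
  fixes c :: "'a \<Rightarrow> nat" and k :: nat
  assumes "finite A" "\<forall>e\<in>A. c e \<in> {1..k}"
  shows "card A = (\<Sum>j=1..k. card {e\<in>A. c e = j})"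
proof -
  have eq: "A = (\<Union>j\<in>{1..k}. {e\<in>A. c e = j})"
  proof
    show "A \<subseteq> (\<Union>j\<in>{1..k}. {e\<in>A. c e = j})"
    proof
      fix e assume "e \<in> A"
      thus "e \<in> (\<Union>j\<in>{1..k}. {e\<in>A. c e = j})" using assms(2) by blast
    qed
  qed blast
  have "card (\<Union>j\<in>{1..k}. {e\<in>A. c e = j}) = (\<Sum>j=1..k. card {e\<in>A. c e = j})"
  proof (rule card_UN_disjoint)
    show "finite {1..k}" by simp
    show "\<forall>i\<in>{1..k}. finite {e \<in> A. c e = i}" using assms(1) by simp
    show "\<forall>i\<in>{1..k}. \<forall>j\<in>{1..k}. i \<noteq> j \<longrightarrow> {e \<in> A. c e = i} \<inter> {e \<in> A. c e = j} = {}"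
      by blast
  qed
  thus ?thesis using eq by simp
qed


locale ext =
  fixes V :: "'a set" and E :: "'a set set" and c :: "'a set \<Rightarrow> nat"
    and q :: nat and a D :: "nat \<Rightarrow> nat" and m W :: nat
  assumes F: "flip_graph V E c q a"
    and eD: "\<forall>v\<in>V. \<forall>j\<in>{1..q}. e_col E c j v = D j"
    and q1: "1 < q" and m1: "1 \<le> m" and W1: "1 \<le> W"
begin

lemma Fall: "simple_graph V E \<and> V \<noteq> {} \<and>
     (\<forall>j\<in>{1..q}. 0 < a j) \<and>
     (\<forall>i j. 1 \<le> i \<and> i < j \<and> j \<le> q \<longrightarrow> a i < a j) \<and>
     (\<forall>e\<in>E. c e \<in> {1..q}) \<and>
     (\<forall>v\<in>V. card {e \<in> E. v \<in> e} = (\<Sum>j=1..q. a j)) \<and>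
     (\<forall>v\<in>V. \<forall>j\<in>{1..q}. deg_col E c j v = a j) \<and>
     (\<forall>v\<in>V. \<forall>j. 1 \<le> j \<and> j < q \<longrightarrow> e_col E c (Suc j) v < e_col E c j v)"
  using F unfolding flip_graph_def .

lemma sg: "simple_graph V E" using Fall by (elim conjE)
lemma Vfin: "finite V" using sg unfolding simple_graph_def by (elim conjE)
lemma Vne: "V \<noteq> {}" using Fall by (elim conjE)
lemma cE: "e \<in> E \<Longrightarrow> c e \<in> {1..q}"
proof -
  assume "e \<in> E"
  moreover have "\<forall>e\<in>E. c e \<in> {1..q}" using Fall by (elim conjE)
  ultimately show ?thesis by (rule bspec[rotated])
qed
lemma degF: "v \<in> V \<Longrightarrow> j \<in> {1..q} \<Longrightarrow> deg_col E c j v = a j"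
proof -
  assume "v \<in> V" "j \<in> {1..q}"
  moreover have "\<forall>v\<in>V. \<forall>j\<in>{1..q}. deg_col E c j v = a j" using Fall by (elim conjE)
  ultimately show ?thesis by blast
qed
lemma degtotF: "v \<in> V \<Longrightarrow> card {e \<in> E. v \<in> e} = (\<Sum>j=1..q. a j)"
proof -
  assume "v \<in> V"
  moreover have "\<forall>v\<in>V. card {e \<in> E. v \<in> e} = (\<Sum>j=1..q. a j)" using Fall by (elim conjE)
  ultimately show ?thesis by blast
qed
lemma amono: "1 \<le> i \<Longrightarrow> i < j \<Longrightarrow> j \<le> q \<Longrightarrow> a i < a j"
proof -
  assume "1 \<le> i" "i < j" "j \<le> q"
  moreover have "\<forall>i j. 1 \<le> i \<and> i < j \<and> j \<le> q \<longrightarrow> a i < a j" using Fall by (elim conjE)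
  ultimately show ?thesis by blast
qed
lemma apos: "j \<in> {1..q} \<Longrightarrow> 0 < a j"
proof -
  assume "j \<in> {1..q}"
  moreover have "\<forall>j\<in>{1..q}. 0 < a j" using Fall by (elim conjE)
  ultimately show ?thesis by blast
qed
lemma Dmono: "1 \<le> j \<Longrightarrow> j < q \<Longrightarrow> D (Suc j) < D j"
proof -
  assume j: "1 \<le> j" "j < q"
  obtain v where v: "v \<in> V" using Vne by blast
  have "\<forall>v\<in>V. \<forall>j. 1 \<le> j \<and> j < q \<longrightarrow> e_col E c (Suc j) v < e_col E c j v" using Fall by (elim conjE)
  hence "e_col E c (Suc j) v < e_col E c j v" using v j by blast
  moreover have "e_col E c (Suc j) v = D (Suc j)" using eD v j by simp
  moreover have "e_col E c j v = D j" using eD v j by simp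
  ultimately show ?thesis by simp
qed

definition NF where "NF x = closed_nbhd E x"
definition d where "d = 1 + (\<Sum>j=1..q. a j)"
definition SD where "SD = (\<Sum>j=1..q. D j)"
definition t where "t = d + 1"
definition uu where "uu i = i * t"
definition ww where "ww i = W + m - i"
definition B where "B = m * t + W"
definition n where "n = m * B"
definition colof where "colof (\<delta>::nat) = \<delta> div B + 1"
definition isA where "isA \<delta> \<longleftrightarrow> \<delta> < n \<and> \<delta> mod B < uu (colof \<delta>)"
definition isB where "isB \<delta> \<longleftrightarrow> \<delta> < n \<and> uu (colof \<delta>) \<le> \<delta> mod B \<and> \<delta> mod B < uu (colof \<delta>) + ww (colof \<delta>)"
definition dd :: "bool \<Rightarrow> int \<Rightarrow> int \<Rightarrow> nat" where
  "dd s y y' = nat ((if s then y - y' else y' - y) mod int n)"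
definition yof :: "bool \<Rightarrow> int \<Rightarrow> nat \<Rightarrow> int" where
  "yof s y \<delta> = (if s then y - int \<delta> else y + int \<delta>) mod int n"
definition VG :: "('a \<times> bool \<times> int) set" where "VG = V \<times> (UNIV::bool set) \<times> {0..<int n}"
definition adjG :: "('a \<times> bool \<times> int) \<Rightarrow> ('a \<times> bool \<times> int) \<Rightarrow> bool" where
  "adjG p p' \<longleftrightarrow> p \<in> VG \<and> p' \<in> VG \<and>
     (case p of (x,s,y) \<Rightarrow> case p' of (x',s',y') \<Rightarrow>
       (s = s' \<and> y = y' \<and> {x,x'} \<in> E) \<or>
       (s \<noteq> s' \<and> (isA (dd s y y') \<and> x' = x \<or> isB (dd s y y') \<and> x' \<in> NF x)))"
definition kap :: "('a \<times> bool \<times> int) \<Rightarrow> ('a \<times> bool \<times> int) \<Rightarrow> nat" where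
  "kap p p' = (case p of (x,s,y) \<Rightarrow> case p' of (x',s',y') \<Rightarrow>
      (if s = s' then c {x,x'} else q + colof (dd s y y')))"
definition EG where "EG = {{p,p'} | p p'. adjG p p'}"
definition cG where "cG e = kap (SOME p. p \<in> e) (SOME p'. p' \<in> e \<and> p' \<noteq> (SOME p. p \<in> e))"

lemma VG_mem[simp]: "(x,s,y) \<in> VG \<longleftrightarrow> x \<in> V \<and> 0 \<le> y \<and> y < int n"
  unfolding VG_def by auto

lemma adjG_simp: "adjG (x,s,y) (x',s',y') \<longleftrightarrow> x \<in> V \<and> 0 \<le> y \<and> y < int n \<and> x' \<in> V \<and> 0 \<le> y' \<and> y' < int n \<and>
       ((s = s' \<and> y = y' \<and> {x,x'} \<in> E) \<or>
       (s \<noteq> s' \<and> (isA (dd s y y') \<and> x' = x \<or> isB (dd s y y') \<and> x' \<in> NF x)))"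
  unfolding adjG_def by simp

lemma kap_simp: "kap (x,s,y) (x',s',y') = (if s = s' then c {x,x'} else q + colof (dd s y y'))"
  unfolding kap_def by simp

lemma B_pos: "0 < B" unfolding B_def using W1 by simp
lemma n_pos: "0 < n" unfolding n_def using B_pos m1 by simp

lemma dd_lt: "dd s y y' < n"
proof -
  have "(if s then y - y' else y' - y) mod int n < int n" using n_pos by simp
  thus ?thesis unfolding dd_def using n_pos by (simp add: nat_less_iff)
qed

lemma dd_sym: "s \<noteq> s' \<Longrightarrow> dd s' y' y = dd s y y'"
  unfolding dd_def by (cases s) auto

lemma yof_in: "0 \<le> yof s y \<delta> \<and> yof s y \<delta> < int n"
  unfolding yof_def using n_pos by simp

lemma dd_yof: "\<delta> < n \<Longrightarrow> dd s y (yof s y \<delta>) = \<delta>"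
proof -
  assume dl: "\<delta> < n"
  have "(if s then y - yof s y \<delta> else yof s y \<delta> - y) mod int n = int \<delta> mod int n"
    unfolding yof_def by (cases s) (simp_all add: mod_simps)
  also have "\<dots> = int \<delta>" using dl by simp
  finally show ?thesis unfolding dd_def by simp
qed

lemma yof_dd: "0 \<le> y' \<Longrightarrow> y' < int n \<Longrightarrow> yof s y (dd s y y') = y'"
proof -
  assume y': "0 \<le> y'" "y' < int n"
  have nn: "0 \<le> (if s then y - y' else y' - y) mod int n" using n_pos by simp
  have "yof s y (dd s y y') = (if s then y - (y - y') mod int n else y + (y' - y) mod int n) mod int n"
    unfolding yof_def dd_def using nn by (cases s) simp_all
  also have "\<dots> = y' mod int n"
    by (cases s) (simp_all add: mod_simps)
  also have "\<dots> = y'" using y' by simp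
  finally show ?thesis .
qed

lemma NF_sym: "x' \<in> NF x \<longleftrightarrow> x \<in> NF x'"
  unfolding NF_def closed_nbhd_def by (auto simp: insert_commute)

lemma NF_V: "x \<in> V \<Longrightarrow> NF x \<subseteq> V"
  unfolding NF_def closed_nbhd_def using sg_vert[OF sg] by auto

lemma NF_self: "x \<in> NF x" unfolding NF_def closed_nbhd_def by simp

lemma adjG_sym: "adjG p p' \<Longrightarrow> adjG p' p"
proof -
  assume h: "adjG p p'"
  obtain x s y where p: "p = (x,s,y)" by (cases p) auto
  obtain x' s' y' where p': "p' = (x',s',y')" by (cases p') auto
  show ?thesis
  proof (cases "s = s'")
    case True thus ?thesis using h unfolding p p' adjG_simp by (simp add: insert_commute)
  next
    case False
    hence dd: "dd s' y' y = dd s y y'" by (rule dd_sym)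
    have "isA (dd s y y') \<and> x' = x \<or> isB (dd s y y') \<and> x' \<in> NF x" "s \<noteq> s'"
      using h False unfolding p p' adjG_simp by blast+
    hence "isA (dd s' y' y) \<and> x = x' \<or> isB (dd s' y' y) \<and> x \<in> NF x'" using NF_sym dd by metis
    thus ?thesis using h False unfolding p p' adjG_simp by blast
  qed
qed

lemma adjG_irr: "\<not> adjG p p"
proof
  assume h: "adjG p p"
  obtain x s y where p: "p = (x,s,y)" by (cases p) auto
  have "{x,x} \<in> E" using h unfolding p adjG_simp by auto
  thus False using sg_noloop[OF sg] by blast
qed

lemma kap_sym: "kap p p' = kap p' p"
proof -
  obtain x s y where p: "p = (x,s,y)" by (cases p) auto
  obtain x' s' y' where p': "p' = (x',s',y')" by (cases p') auto
  show ?thesis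
  proof (cases "s = s'")
    case True thus ?thesis unfolding p p' kap_simp by (simp add: insert_commute)
  next
    case False thus ?thesis unfolding p p' kap_simp using dd_sym[OF False] by simp
  qed
qed

lemma EG_mem: "{u,w} \<in> EG \<longleftrightarrow> adjG u w"
proof
  assume "{u,w} \<in> EG"
  then obtain p p' where "{u,w} = {p,p'}" "adjG p p'" unfolding EG_def by blast
  thus "adjG u w" unfolding doubleton_eq_iff using adjG_sym by blast
next
  assume "adjG u w" thus "{u,w} \<in> EG" unfolding EG_def by blast
qed

lemma EG_edge: "e \<in> EG \<Longrightarrow> \<exists>u w. e = {u,w} \<and> adjG u w"
  unfolding EG_def by blast

lemma cG_eq: "u \<noteq> w \<Longrightarrow> cG {u,w} = kap u w"
proof -
  assume uw: "u \<noteq> w"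
  define p0 where "p0 = (SOME p. p \<in> {u,w})"
  have p0: "p0 \<in> {u,w}" unfolding p0_def by (rule someI[of _ u]) simp
  define p1 where "p1 = (SOME p'. p' \<in> {u,w} \<and> p' \<noteq> p0)"
  have ex: "\<exists>p'. p' \<in> {u,w} \<and> p' \<noteq> p0"
  proof (cases "p0 = u")
    case True thus ?thesis using uw by blast
  next
    case False thus ?thesis by blast
  qed
  have p1: "p1 \<in> {u,w} \<and> p1 \<noteq> p0" unfolding p1_def
    using someI_ex[OF ex] .
  have "cG {u,w} = kap p0 p1" unfolding cG_def p1_def p0_def ..
  thus ?thesis using p0 p1 kap_sym[of u w] by auto
qed

lemma VG_fin: "finite VG" unfolding VG_def using Vfin by simp

lemma sgG: "simple_graph VG EG"
  unfolding simple_graph_def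
proof (intro conjI ballI)
  show "finite VG" by (rule VG_fin)
  fix e assume "e \<in> EG"
  then obtain u w where e: "e = {u,w}" "adjG u w" using EG_edge by blast
  have "u \<noteq> w" using e(2) adjG_irr by blast
  moreover have "u \<in> VG" "w \<in> VG" using e(2) unfolding adjG_def by auto
  ultimately show "\<exists>u v. u \<noteq> v \<and> u \<in> VG \<and> v \<in> VG \<and> e = {u, v}" using e by blast
qed

end

context ext begin

lemma NF_iff: "x' \<in> NF x \<longleftrightarrow> x' = x \<or> {x',x} \<in> E"
  unfolding NF_def closed_nbhd_def by simp

lemma isAB: "\<not> (isA \<delta> \<and> isB \<delta>)" unfolding isA_def isB_def by simp

lemma colof_range: "\<delta> < n \<Longrightarrow> colof \<delta> \<in> {1..m}"
proof -
  assume "\<delta> < n"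
  hence "\<delta> div B < m" unfolding n_def using B_pos by (simp add: div_less_iff_less_mult mult.commute)
  thus ?thesis unfolding colof_def by simp
qed

lemma adjG_VG: "adjG u w \<Longrightarrow> u \<in> VG \<and> w \<in> VG" unfolding adjG_def by blast

lemma deg_G: "deg_col EG cG j p = card {u. adjG p u \<and> kap p u = j}"
proof -
  have "deg_col EG cG j p = card {u. {u,p} \<in> EG \<and> cG {u,p} = j}"
    unfolding deg_col_def by (rule deg_nbrs[OF sgG])
  also have "{u. {u,p} \<in> EG \<and> cG {u,p} = j} = {u. adjG p u \<and> kap p u = j}"
  proof (rule Collect_cong)
    fix u
    show "({u,p} \<in> EG \<and> cG {u,p} = j) = (adjG p u \<and> kap p u = j)"
    proof (cases "adjG p u")
      case True
      hence "u \<noteq> p" using adjG_irr by blast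
      hence "cG {u,p} = kap p u" using cG_eq kap_sym by metis
      moreover have "{u,p} \<in> EG" using True adjG_sym EG_mem by blast
      ultimately show ?thesis using True by simp
    next
      case False
      hence "{u,p} \<notin> EG" using adjG_sym EG_mem by blast
      thus ?thesis using False by simp
    qed
  qed
  finally show ?thesis .
qed

definition NG where "NG p = closed_nbhd EG p"

lemma e_G: "2 * e_col EG cG j p = card {(u,w). u \<in> NG p \<and> w \<in> NG p \<and> adjG u w \<and> kap u w = j}"
proof -
  have "card {(u,w). u \<in> NG p \<and> w \<in> NG p \<and> {u,w} \<in> EG \<and> cG {u,w} = j} = 2 * e_col EG cG j p"
    unfolding e_col_def NG_def by (rule ord_pairs[OF sgG])
  moreover have "{(u,w). u \<in> NG p \<and> w \<in> NG p \<and> {u,w} \<in> EG \<and> cG {u,w} = j}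
      = {(u,w). u \<in> NG p \<and> w \<in> NG p \<and> adjG u w \<and> kap u w = j}"
  proof (rule set_eqI)
    fix z :: "('a \<times> bool \<times> int) \<times> ('a \<times> bool \<times> int)"
    obtain u w where z: "z = (u,w)" by (cases z) auto
    have "({u,w} \<in> EG \<and> cG {u,w} = j) = (adjG u w \<and> kap u w = j)"
    proof (cases "adjG u w")
      case True
      hence "u \<noteq> w" using adjG_irr by blast
      thus ?thesis using True cG_eq EG_mem by simp
    next
      case False thus ?thesis using EG_mem by simp
    qed
    thus "z \<in> {(u,w). u \<in> NG p \<and> w \<in> NG p \<and> {u,w} \<in> EG \<and> cG {u,w} = j} \<longleftrightarrow>
          z \<in> {(u,w). u \<in> NG p \<and> w \<in> NG p \<and> adjG u w \<and> kap u w = j}" unfolding z by simp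
  qed
  ultimately show ?thesis by simp
qed

lemma NG_char:
  assumes x: "x \<in> V" and y: "0 \<le> y" "y < int n"
  shows "NG (x,s,y) = {(x1,s,y) | x1. x1 \<in> NF x} \<union>
     {(x2, \<not>s, y') | x2 y'. 0 \<le> y' \<and> y' < int n \<and> (isA (dd s y y') \<and> x2 = x \<or> isB (dd s y y') \<and> x2 \<in> NF x)}"
    (is "_ = ?L \<union> ?R")
proof -
  have "NG (x,s,y) = insert (x,s,y) {u. adjG (x,s,y) u}"
    unfolding NG_def closed_nbhd_def using EG_mem adjG_sym by blast
  also have "\<dots> = ?L \<union> ?R"
  proof (rule set_eqI)
    fix u :: "'a \<times> bool \<times> int"
    obtain x' s' y' where u: "u = (x',s',y')" by (cases u) auto
    have NFV: "NF x \<subseteq> V" using NF_V x by blast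
    show "u \<in> insert (x,s,y) {u. adjG (x,s,y) u} \<longleftrightarrow> u \<in> ?L \<union> ?R"
    proof (cases "s' = s")
      case True
      have "u \<in> insert (x,s,y) {u. adjG (x,s,y) u} \<longleftrightarrow> (x' = x \<and> y' = y) \<or> (y' = y \<and> {x,x'} \<in> E \<and> x' \<in> V)"
        unfolding u True using x y by (auto simp: adjG_simp)
      also have "\<dots> \<longleftrightarrow> y' = y \<and> x' \<in> NF x"
        using NF_iff[of x' x] NFV x by (auto simp: insert_commute)
      also have "\<dots> \<longleftrightarrow> u \<in> ?L \<union> ?R" unfolding u True by auto
      finally show ?thesis .
    next
      case False
      hence s': "s' = (\<not> s)" by auto
      have "u \<in> insert (x,s,y) {u. adjG (x,s,y) u} \<longleftrightarrow> adjG (x,s,y) (x',\<not>s,y')"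
        unfolding u s' by simp
      also have "\<dots> \<longleftrightarrow> 0 \<le> y' \<and> y' < int n \<and> (isA (dd s y y') \<and> x' = x \<or> isB (dd s y y') \<and> x' \<in> NF x)"
        unfolding adjG_simp using x y NFV by auto
      also have "\<dots> \<longleftrightarrow> u \<in> ?L \<union> ?R" unfolding u s' by auto
      finally show ?thesis .
    qed
  qed
  finally show ?thesis .
qed

lemma reparam:
  fixes \<Phi> :: "'z \<Rightarrow> nat \<Rightarrow> bool"
  shows "card {(z,y'). 0 \<le> y' \<and> y' < int n \<and> \<Phi> z (dd s y y')} = card {(z,\<delta>). \<delta> < n \<and> \<Phi> z \<delta>}"
proof (rule bij_betw_same_card[of "\<lambda>(z,y'). (z, dd s y y')"], rule bij_betw_byWitness[where f'="\<lambda>(z,\<delta>). (z, yof s y \<delta>)"])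
qed (use yof_dd dd_yof dd_lt yof_in in auto)

lemma reparam1:
  fixes \<Phi> :: "nat \<Rightarrow> bool"
  shows "card {y'. 0 \<le> y' \<and> y' < int n \<and> \<Phi> (dd s y y')} = card {\<delta>. \<delta> < n \<and> \<Phi> \<delta>}"
proof (rule bij_betw_same_card[of "\<lambda>y'. dd s y y'"], rule bij_betw_byWitness[where f'="\<lambda>\<delta>. yof s y \<delta>"])
qed (use yof_dd dd_yof dd_lt yof_in in auto)

end

context ext begin

lemma t1: "1 \<le> t" unfolding t_def by simp

lemma uw_le_B: "1 \<le> i \<Longrightarrow> i \<le> m \<Longrightarrow> uu i + ww i \<le> B"
proof -
  assume i: "1 \<le> i" "i \<le> m"
  have mi: "m = i + (m - i)" using i by simp
  have "m * t = (i + (m - i)) * t" using mi by metis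
  hence "m * t = i * t + (m - i) * t" by (simp only: add_mult_distrib)
  moreover have "m - i \<le> (m - i) * t" using t1 by simp
  ultimately show ?thesis unfolding uu_def ww_def B_def using i by linarith
qed

lemma blk: "r < B \<Longrightarrow> (k * B + r) div B = k \<and> (k * B + r) mod B = r"
  using B_pos by simp

lemma blk_lt: "1 \<le> i \<Longrightarrow> i \<le> m \<Longrightarrow> r < B \<Longrightarrow> (i - 1) * B + r < n"
proof -
  assume i: "1 \<le> i" "i \<le> m" and r: "r < B"
  have "(i - 1) * B + r < (i - 1) * B + B" using r by simp
  also have "\<dots> = i * B" using i by (cases i) auto
  also have "\<dots> \<le> m * B" using i by simp
  finally show ?thesis unfolding n_def .
qed

lemma card_A: assumes i: "1 \<le> i" "i \<le> m" shows "card {\<delta>. isA \<delta> \<and> colof \<delta> = i} = uu i"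
proof -
  have uB: "uu i \<le> B" using uw_le_B[OF i] by simp
  have "{\<delta>. isA \<delta> \<and> colof \<delta> = i} = (\<lambda>r. (i - 1) * B + r) ` {0..<uu i}"
  proof (rule set_eqI)
    fix \<delta>
    show "\<delta> \<in> {\<delta>. isA \<delta> \<and> colof \<delta> = i} \<longleftrightarrow> \<delta> \<in> (\<lambda>r. (i - 1) * B + r) ` {0..<uu i}"
    proof
      assume h: "\<delta> \<in> {\<delta>. isA \<delta> \<and> colof \<delta> = i}"
      hence "\<delta> div B = i - 1" unfolding colof_def by auto
      hence "\<delta> = (i - 1) * B + \<delta> mod B" by (metis div_mult_mod_eq)
      moreover have "\<delta> mod B < uu i" using h unfolding isA_def by auto
      ultimately show "\<delta> \<in> (\<lambda>r. (i - 1) * B + r) ` {0..<uu i}" by (intro image_eqI[of _ _ "\<delta> mod B"]) auto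
    next
      assume "\<delta> \<in> (\<lambda>r. (i - 1) * B + r) ` {0..<uu i}"
      then obtain r where r0: "r \<in> {0..<uu i}" "\<delta> = (i - 1) * B + r" by (rule imageE) blast
      hence r: "r < uu i" "\<delta> = (i - 1) * B + r" by auto
      have rB: "r < B" using r uB by simp
      have "\<delta> div B = i - 1" "\<delta> mod B = r" using blk[OF rB] r by auto
      hence "colof \<delta> = i" unfolding colof_def using i by simp
      moreover have "\<delta> < n" using blk_lt[OF i rB] r by simp
      ultimately show "\<delta> \<in> {\<delta>. isA \<delta> \<and> colof \<delta> = i}" unfolding isA_def using \<open>\<delta> mod B = r\<close> r by simp
    qed
  qed
  moreover have "inj_on (\<lambda>r. (i - 1) * B + r) {0..<uu i}" by (rule inj_onI) simp
  ultimately show ?thesis by (simp add: card_image)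
qed

lemma card_B: assumes i: "1 \<le> i" "i \<le> m" shows "card {\<delta>. isB \<delta> \<and> colof \<delta> = i} = ww i"
proof -
  have uB: "uu i + ww i \<le> B" using uw_le_B[OF i] by simp
  have "{\<delta>. isB \<delta> \<and> colof \<delta> = i} = (\<lambda>r. (i - 1) * B + (uu i + r)) ` {0..<ww i}"
  proof (rule set_eqI)
    fix \<delta>
    show "\<delta> \<in> {\<delta>. isB \<delta> \<and> colof \<delta> = i} \<longleftrightarrow> \<delta> \<in> (\<lambda>r. (i - 1) * B + (uu i + r)) ` {0..<ww i}"
    proof
      assume h: "\<delta> \<in> {\<delta>. isB \<delta> \<and> colof \<delta> = i}"
      hence "\<delta> div B = i - 1" unfolding colof_def by auto
      hence "\<delta> = (i - 1) * B + \<delta> mod B" by (metis div_mult_mod_eq)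
      moreover have "uu i \<le> \<delta> mod B" "\<delta> mod B < uu i + ww i" using h unfolding isB_def by auto
      ultimately show "\<delta> \<in> (\<lambda>r. (i - 1) * B + (uu i + r)) ` {0..<ww i}"
        by (intro image_eqI[of _ _ "\<delta> mod B - uu i"]) auto
    next
      assume "\<delta> \<in> (\<lambda>r. (i - 1) * B + (uu i + r)) ` {0..<ww i}"
      then obtain r where r0: "r \<in> {0..<ww i}" "\<delta> = (i - 1) * B + (uu i + r)" by (rule imageE) blast
      hence r: "r < ww i" "\<delta> = (i - 1) * B + (uu i + r)" by auto
      have rB: "uu i + r < B" using r uB by simp
      have "\<delta> div B = i - 1" "\<delta> mod B = uu i + r" using blk[OF rB] r by auto
      hence "colof \<delta> = i" unfolding colof_def using i by simp
      moreover have "\<delta> < n" using blk_lt[OF i rB] r by simp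
      ultimately show "\<delta> \<in> {\<delta>. isB \<delta> \<and> colof \<delta> = i}" unfolding isB_def using \<open>\<delta> mod B = uu i + r\<close> r by simp
    qed
  qed
  moreover have "inj_on (\<lambda>r. (i - 1) * B + (uu i + r)) {0..<ww i}" by (rule inj_onI) simp
  ultimately show ?thesis by (simp add: card_image)
qed

lemma card_Ball: "card {\<delta>. isB \<delta>} = (\<Sum>i=1..m. ww i)"
proof -
  have eqU: "{\<delta>. isB \<delta>} = (\<Union>i\<in>{1..m}. {\<delta>. isB \<delta> \<and> colof \<delta> = i})"
  proof
    show "{\<delta>. isB \<delta>} \<subseteq> (\<Union>i\<in>{1..m}. {\<delta>. isB \<delta> \<and> colof \<delta> = i})"
    proof
      fix \<delta> assume "\<delta> \<in> {\<delta>. isB \<delta>}"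
      hence "isB \<delta>" "colof \<delta> \<in> {1..m}" using colof_range unfolding isB_def by auto
      thus "\<delta> \<in> (\<Union>i\<in>{1..m}. {\<delta>. isB \<delta> \<and> colof \<delta> = i})" by blast
    qed
  qed blast
  have "card (\<Union>i\<in>{1..m}. {\<delta>. isB \<delta> \<and> colof \<delta> = i}) = (\<Sum>i=1..m. card {\<delta>. isB \<delta> \<and> colof \<delta> = i})"
  proof (rule card_UN_disjoint)
    show "finite {1..m}" by simp
    show "\<forall>i\<in>{1..m}. finite {\<delta>. isB \<delta> \<and> colof \<delta> = i}"
    proof
      fix i show "finite {\<delta>. isB \<delta> \<and> colof \<delta> = i}"
        by (rule finite_subset[of _ "{..<n}"]) (auto simp: isB_def)
    qed
    show "\<forall>i\<in>{1..m}. \<forall>j\<in>{1..m}. i \<noteq> j \<longrightarrow> {\<delta>. isB \<delta> \<and> colof \<delta> = i} \<inter> {\<delta>. isB \<delta> \<and> colof \<delta> = j} = {}"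
      by blast
  qed
  also have "\<dots> = (\<Sum>i=1..m. ww i)" using card_B by (intro sum.cong) auto
  finally show ?thesis using eqU by simp
qed

lemma card_NF: assumes x: "x \<in> V" shows "card (NF x) = d"
proof -
  have fin: "finite {u. {u,x} \<in> E}"
    by (rule finite_subset[OF _ Vfin]) (use sg_vert[OF sg] in blast)
  have nx: "x \<notin> {u. {u,x} \<in> E}" using sg_noloop[OF sg] by blast
  have "NF x = insert x {u. {u,x} \<in> E}" unfolding NF_def closed_nbhd_def ..
  hence "card (NF x) = Suc (card {u. {u,x} \<in> E})" using fin nx by simp
  moreover have "card {e \<in> E. x \<in> e \<and> True} = card {u. {u,x} \<in> E \<and> True}"
    by (rule deg_nbrs[OF sg])
  ultimately show ?thesis using degtotF[OF x] unfolding d_def by simp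
qed

definition PP where "PP x = {(x1,x2). x1 \<in> NF x \<and> x2 \<in> NF x \<and> x2 \<in> NF x1}"

lemma card_PP: assumes x: "x \<in> V" shows "card (PP x) = d + 2 * SD"
proof -
  let ?D = "(\<lambda>x1. (x1,x1)) ` NF x"
  let ?O = "{(x1,x2). x1 \<in> NF x \<and> x2 \<in> NF x \<and> {x1,x2} \<in> E}"
  have NFV: "NF x \<subseteq> V" using NF_V[OF x] .
  have finNF: "finite (NF x)" using NFV Vfin finite_subset by blast
  have eq: "PP x = ?D \<union> ?O"
  proof (rule set_eqI)
    fix z :: "'a \<times> 'a"
    obtain x1 x2 where z: "z = (x1,x2)" by (cases z) auto
    show "z \<in> PP x \<longleftrightarrow> z \<in> ?D \<union> ?O"
      unfolding z PP_def using NF_iff[of x2 x1] by (auto simp: insert_commute)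
  qed
  have disj: "?D \<inter> ?O = {}" using sg_noloop[OF sg] by auto
  have finO: "finite ?O" by (rule finite_subset[of _ "NF x \<times> NF x"]) (use finNF in auto)
  have cD: "card ?D = d" using card_NF[OF x] by (simp add: card_image inj_on_def)
  have "card {(u,w). u \<in> NF x \<and> w \<in> NF x \<and> {u,w} \<in> E \<and> True} = 2 * card {e \<in> E. e \<subseteq> NF x \<and> True}"
    by (rule ord_pairs[OF sg])
  hence cO: "card ?O = 2 * card {e \<in> E. e \<subseteq> NF x}" by simp
  have "card {e \<in> E. e \<subseteq> NF x} = (\<Sum>j=1..q. card {e \<in> {e \<in> E. e \<subseteq> NF x}. c e = j})"
    by (rule card_colour_sum) (use sg_finE[OF sg] cE in auto)
  also have "\<dots> = (\<Sum>j=1..q. e_col E c j x)" unfolding e_col_def NF_def by (intro sum.cong) auto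
  also have "\<dots> = SD" unfolding SD_def using eD x by (intro sum.cong) auto
  finally have "card {e \<in> E. e \<subseteq> NF x} = SD" .
  thus ?thesis using eq disj finO cD cO finNF by (simp add: card_Un_disjoint)
qed

end

context ext begin

lemma deg_low:
  assumes x: "x \<in> V" and y: "0 \<le> y" "y < int n" and j: "j \<in> {1..q}"
  shows "card {u. adjG (x,s,y) u \<and> kap (x,s,y) u = j} = a j"
proof -
  have eq: "{u. adjG (x,s,y) u \<and> kap (x,s,y) u = j} = (\<lambda>x'. (x',s,y)) ` {x'. {x',x} \<in> E \<and> c {x',x} = j}"
  proof (rule set_eqI)
    fix u :: "'a \<times> bool \<times> int"
    obtain x' s' y' where u: "u = (x',s',y')" by (cases u) auto
    show "u \<in> {u. adjG (x,s,y) u \<and> kap (x,s,y) u = j} \<longleftrightarrow> u \<in> (\<lambda>x'. (x',s,y)) ` {x'. {x',x} \<in> E \<and> c {x',x} = j}"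
    proof
      assume h: "u \<in> {u. adjG (x,s,y) u \<and> kap (x,s,y) u = j}"
      have ss: "s' = s"
      proof (rule ccontr)
        assume "s' \<noteq> s"
        hence "kap (x,s,y) u = q + colof (dd s y y')" unfolding u kap_simp by auto
        hence "kap (x,s,y) u > q" unfolding colof_def by simp
        thus False using h j by simp
      qed
      have "y' = y \<and> {x,x'} \<in> E" using h unfolding u ss by (simp add: adjG_simp)
      moreover have "kap (x,s,y) u = c {x,x'}" unfolding u ss kap_simp by simp
      ultimately show "u \<in> (\<lambda>x'. (x',s,y)) ` {x'. {x',x} \<in> E \<and> c {x',x} = j}"
        using h unfolding u ss by (auto simp: insert_commute)
    next
      assume "u \<in> (\<lambda>x'. (x',s,y)) ` {x'. {x',x} \<in> E \<and> c {x',x} = j}"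
      then obtain x'' where h: "{x'',x} \<in> E" "c {x'',x} = j" "u = (x'',s,y)" by blast
      have "x'' \<in> V" using sg_vert[OF sg h(1)] by simp
      thus "u \<in> {u. adjG (x,s,y) u \<and> kap (x,s,y) u = j}"
        using h x y \<open>x'' \<in> V\<close> by (simp add: adjG_simp kap_simp insert_commute)
    qed
  qed
  have "card {u. adjG (x,s,y) u \<and> kap (x,s,y) u = j} = card {x'. {x',x} \<in> E \<and> c {x',x} = j}"
    unfolding eq by (rule card_image) (simp add: inj_on_def)
  also have "\<dots> = card {e \<in> E. x \<in> e \<and> c e = j}" by (rule deg_nbrs[OF sg, symmetric])
  also have "\<dots> = a j" using degF[OF x j] unfolding deg_col_def .
  finally show ?thesis .
qed

lemma deg_high:
  assumes x: "x \<in> V" and y: "0 \<le> y" "y < int n" and i: "1 \<le> i" "i \<le> m"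
  shows "card {u. adjG (x,s,y) u \<and> kap (x,s,y) u = q + i} = uu i + d * ww i"
proof -
  define \<Phi> where "\<Phi> x' \<delta> \<longleftrightarrow> colof \<delta> = i \<and> (isA \<delta> \<and> x' = x \<or> isB \<delta> \<and> x' \<in> NF x)" for x' \<delta>
  have NFV: "NF x \<subseteq> V" using NF_V[OF x] .
  have eq: "{u. adjG (x,s,y) u \<and> kap (x,s,y) u = q + i} =
     (\<lambda>(x',y'). (x',\<not>s,y')) ` {(x',y'). 0 \<le> y' \<and> y' < int n \<and> \<Phi> x' (dd s y y')}"
  proof (rule set_eqI)
    fix u :: "'a \<times> bool \<times> int"
    obtain x' s' y' where u: "u = (x',s',y')" by (cases u) auto
    show "u \<in> {u. adjG (x,s,y) u \<and> kap (x,s,y) u = q + i} \<longleftrightarrow>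
       u \<in> (\<lambda>(x',y'). (x',\<not>s,y')) ` {(x',y'). 0 \<le> y' \<and> y' < int n \<and> \<Phi> x' (dd s y y')}"
    proof
      assume h: "u \<in> {u. adjG (x,s,y) u \<and> kap (x,s,y) u = q + i}"
      have ss: "s' = (\<not> s)"
      proof (rule ccontr)
        assume "s' \<noteq> (\<not> s)"
        hence ss: "s' = s" by auto
        have "{x,x'} \<in> E" using h unfolding u ss by (simp add: adjG_simp)
        hence "c {x,x'} \<in> {1..q}" by (rule cE)
        moreover have "kap (x,s,y) u = c {x,x'}" unfolding u ss kap_simp by simp
        ultimately show False using h i by simp
      qed
      have k: "kap (x,s,y) u = q + colof (dd s y y')" unfolding u ss kap_simp by simp
      have "0 \<le> y' \<and> y' < int n \<and> (isA (dd s y y') \<and> x' = x \<or> isB (dd s y y') \<and> x' \<in> NF x)"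
        using h unfolding u ss by (simp add: adjG_simp)
      hence "0 \<le> y' \<and> y' < int n \<and> \<Phi> x' (dd s y y')" using h k unfolding \<Phi>_def by simp
      thus "u \<in> (\<lambda>(x',y'). (x',\<not>s,y')) ` {(x',y'). 0 \<le> y' \<and> y' < int n \<and> \<Phi> x' (dd s y y')}"
        unfolding u ss by (intro image_eqI[of _ _ "(x',y')"]) auto
    next
      assume "u \<in> (\<lambda>(x',y'). (x',\<not>s,y')) ` {(x',y'). 0 \<le> y' \<and> y' < int n \<and> \<Phi> x' (dd s y y')}"
      then obtain z where z: "z \<in> {(x',y'). 0 \<le> y' \<and> y' < int n \<and> \<Phi> x' (dd s y y')}" "u = (\<lambda>(x',y'). (x',\<not>s,y')) z"
        by (rule imageE)
      obtain x'' y'' where zz: "z = (x'',y'')" by (cases z) auto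
      have h: "0 \<le> y''" "y'' < int n" "\<Phi> x'' (dd s y y'')" "u = (x'',\<not>s,y'')" using z unfolding zz by auto
      have "x'' \<in> V" using h(3) x NFV unfolding \<Phi>_def by blast
      thus "u \<in> {u. adjG (x,s,y) u \<and> kap (x,s,y) u = q + i}"
        using h x y \<open>x'' \<in> V\<close> by (auto simp: adjG_simp kap_simp \<Phi>_def)
    qed
  qed
  have "card {u. adjG (x,s,y) u \<and> kap (x,s,y) u = q + i} = card {(x',y'). 0 \<le> y' \<and> y' < int n \<and> \<Phi> x' (dd s y y')}"
    unfolding eq by (rule card_image) (simp add: inj_on_def)
  also have "\<dots> = card {(x',\<delta>). \<delta> < n \<and> \<Phi> x' \<delta>}" by (rule reparam)
  also have "{(x',\<delta>). \<delta> < n \<and> \<Phi> x' \<delta>} = {x} \<times> {\<delta>. isA \<delta> \<and> colof \<delta> = i} \<union> NF x \<times> {\<delta>. isB \<delta> \<and> colof \<delta> = i}"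
    unfolding \<Phi>_def isA_def isB_def by auto
  also have "card \<dots> = card ({x} \<times> {\<delta>. isA \<delta> \<and> colof \<delta> = i}) + card (NF x \<times> {\<delta>. isB \<delta> \<and> colof \<delta> = i})"
  proof (rule card_Un_disjoint)
    show "finite ({x} \<times> {\<delta>. isA \<delta> \<and> colof \<delta> = i})"
      by (rule finite_cartesian_product) (auto intro: finite_subset[of _ "{..<n}"] simp: isA_def)
    show "finite (NF x \<times> {\<delta>. isB \<delta> \<and> colof \<delta> = i})"
      by (rule finite_cartesian_product) (auto intro: finite_subset[of _ "{..<n}"] finite_subset[OF NFV Vfin] simp: isB_def)
    show "{x} \<times> {\<delta>. isA \<delta> \<and> colof \<delta> = i} \<inter> NF x \<times> {\<delta>. isB \<delta> \<and> colof \<delta> = i} = {}"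
      using isAB by blast
  qed
  also have "\<dots> = uu i + d * ww i"
    using card_A[OF i] card_B[OF i] card_NF[OF x] by (simp add: card_cartesian_product)
  finally show ?thesis .
qed

end

context ext begin

lemma NG_mem:
  assumes x: "x \<in> V" and y: "0 \<le> y" "y < int n"
  shows "(x',s',y') \<in> NG (x,s,y) \<longleftrightarrow> (s' = s \<and> y' = y \<and> x' \<in> NF x) \<or>
     (s' \<noteq> s \<and> 0 \<le> y' \<and> y' < int n \<and> (isA (dd s y y') \<and> x' = x \<or> isB (dd s y y') \<and> x' \<in> NF x))"
  unfolding NG_char[OF x y] by auto

lemma kap_same: "adjG (x1,s1,y1) (x2,s1,y2) \<Longrightarrow> kap (x1,s1,y1) (x2,s1,y2) \<in> {1..q}"
proof -
  assume "adjG (x1,s1,y1) (x2,s1,y2)"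
  hence "{x1,x2} \<in> E" by (simp add: adjG_simp)
  hence "c {x1,x2} \<in> {1..q}" by (rule cE)
  thus ?thesis by (simp add: kap_simp)
qed

lemma kap_diff: "s1 \<noteq> s2 \<Longrightarrow> kap (x1,s1,y1) (x2,s2,y2) = q + colof (dd s1 y1 y2)"
  by (simp add: kap_simp)

lemma e_low:
  assumes x: "x \<in> V" and y: "0 \<le> y" "y < int n" and j: "j \<in> {1..q}"
  shows "card {(u,w). u \<in> NG (x,s,y) \<and> w \<in> NG (x,s,y) \<and> adjG u w \<and> kap u w = j} = 2 * D j * (1 + card {\<delta>. isB \<delta>})"
proof -
  define PF where "PF = {(x1,x2). x1 \<in> NF x \<and> x2 \<in> NF x \<and> {x1,x2} \<in> E \<and> c {x1,x2} = j}"
  define L where "L = insert (s,y) ((\<lambda>y'. (\<not>s,y')) ` {y'. 0 \<le> y' \<and> y' < int n \<and> isB (dd s y y')})"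
  define f :: "('a \<times> 'a) \<times> (bool \<times> int) \<Rightarrow> ('a \<times> bool \<times> int) \<times> ('a \<times> bool \<times> int)"
    where "f = (\<lambda>((x1,x2),(s',y')). ((x1,s',y'),(x2,s',y')))"
  have NFV: "NF x \<subseteq> V" using NF_V[OF x] .
  have eq: "{(u,w). u \<in> NG (x,s,y) \<and> w \<in> NG (x,s,y) \<and> adjG u w \<and> kap u w = j} = f ` (PF \<times> L)"
  proof (rule set_eqI)
    fix z :: "('a \<times> bool \<times> int) \<times> ('a \<times> bool \<times> int)"
    obtain x1 s1 y1 x2 s2 y2 where z: "z = ((x1,s1,y1),(x2,s2,y2))" by (cases z) auto
    show "z \<in> {(u,w). u \<in> NG (x,s,y) \<and> w \<in> NG (x,s,y) \<and> adjG u w \<and> kap u w = j} \<longleftrightarrow> z \<in> f ` (PF \<times> L)"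
    proof
      assume "z \<in> {(u,w). u \<in> NG (x,s,y) \<and> w \<in> NG (x,s,y) \<and> adjG u w \<and> kap u w = j}"
      hence h: "(x1,s1,y1) \<in> NG (x,s,y)" "(x2,s2,y2) \<in> NG (x,s,y)" "adjG (x1,s1,y1) (x2,s2,y2)"
          "kap (x1,s1,y1) (x2,s2,y2) = j" unfolding z by auto
      have s12: "s2 = s1"
      proof (rule ccontr)
        assume "s2 \<noteq> s1"
        hence "kap (x1,s1,y1) (x2,s2,y2) > q" using kap_diff[of s1 s2] unfolding colof_def by simp
        thus False using h(4) j by simp
      qed
      have a: "y2 = y1" "{x1,x2} \<in> E" using h(3) unfolding s12 by (simp_all add: adjG_simp)
      have cj: "c {x1,x2} = j" using h(4) unfolding s12 by (simp add: kap_simp)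
      show "z \<in> f ` (PF \<times> L)"
      proof (cases "s1 = s")
        case True
        have "y1 = y" "x1 \<in> NF x" "x2 \<in> NF x" using h(1,2) unfolding s12 True a(1) NG_mem[OF x y] by auto
        hence "((x1,x2),(s1,y1)) \<in> PF \<times> L" unfolding PF_def L_def using a cj True by simp
        thus ?thesis unfolding z s12 a(1) f_def by (intro image_eqI[of _ _ "((x1,x2),(s1,y1))"]) auto
      next
        case False
        have r1: "0 \<le> y1 \<and> y1 < int n \<and> (isA (dd s y y1) \<and> x1 = x \<or> isB (dd s y y1) \<and> x1 \<in> NF x)"
          using h(1) False NG_mem[OF x y, where x'=x1 and s'=s1 and y'=y1] by simp
        have r2: "isA (dd s y y1) \<and> x2 = x \<or> isB (dd s y y1) \<and> x2 \<in> NF x"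
          using h(2) False NG_mem[OF x y, where x'=x2 and s'=s1 and y'=y1] unfolding s12 a(1) by simp
        have nA: "\<not> isA (dd s y y1)"
        proof
          assume "isA (dd s y y1)"
          hence "x1 = x" "x2 = x" using r1 r2 isAB by blast+
          thus False using a(2) sg_noloop[OF sg] by blast
        qed
        have "isB (dd s y y1)" "x1 \<in> NF x" "x2 \<in> NF x" using r1 r2 nA by blast+
        moreover have "s1 = (\<not> s)" using False by auto
        ultimately have "((x1,x2),(s1,y1)) \<in> PF \<times> L" unfolding PF_def L_def using a cj r1 by auto
        thus ?thesis unfolding z s12 a(1) f_def by (intro image_eqI[of _ _ "((x1,x2),(s1,y1))"]) auto
      qed
    next
      assume "z \<in> f ` (PF \<times> L)"
      then obtain w where w: "w \<in> PF \<times> L" "z = f w" by (rule imageE)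
      obtain a1 a2 s' y' where ww: "w = ((a1,a2),(s',y'))" by (cases w) auto
      have pf: "a1 \<in> NF x" "a2 \<in> NF x" "{a1,a2} \<in> E" "c {a1,a2} = j" using w(1) unfolding ww PF_def by auto
      have l: "(s',y') \<in> L" using w(1) unfolding ww by auto
      have zz: "z = ((a1,s',y'),(a2,s',y'))" using w(2) unfolding ww f_def by simp
      have v: "a1 \<in> V" "a2 \<in> V" using pf NFV by auto
      have yr: "0 \<le> y'" "y' < int n" and inN: "(a1,s',y') \<in> NG (x,s,y)" "(a2,s',y') \<in> NG (x,s,y)"
      proof -
        have "(s' = s \<and> y' = y) \<or> (s' = (\<not>s) \<and> 0 \<le> y' \<and> y' < int n \<and> isB (dd s y y'))"
          using l unfolding L_def by auto
        thus "0 \<le> y'" "y' < int n" "(a1,s',y') \<in> NG (x,s,y)" "(a2,s',y') \<in> NG (x,s,y)"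
          using y pf NG_mem[OF x y] by auto
      qed
      have "adjG (a1,s',y') (a2,s',y')" using v yr pf by (simp add: adjG_simp)
      moreover have "kap (a1,s',y') (a2,s',y') = j" using pf by (simp add: kap_simp)
      ultimately show "z \<in> {(u,w). u \<in> NG (x,s,y) \<and> w \<in> NG (x,s,y) \<and> adjG u w \<and> kap u w = j}"
        unfolding zz using inN by simp
    qed
  qed
  have inj: "inj_on f (PF \<times> L)" unfolding f_def by (rule inj_onI) auto
  have finNF: "finite (NF x)" using NFV Vfin finite_subset by blast
  have finPF: "finite PF" by (rule finite_subset[of _ "NF x \<times> NF x"]) (use finNF in \<open>auto simp: PF_def\<close>)
  have "card {(u,w). u \<in> NF x \<and> w \<in> NF x \<and> {u,w} \<in> E \<and> c {u,w} = j} = 2 * card {e \<in> E. e \<subseteq> NF x \<and> c e = j}"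
    by (rule ord_pairs[OF sg])
  hence cPF: "card PF = 2 * D j" unfolding PF_def using eD x j by (simp add: e_col_def NF_def)
  have finY: "finite {y'. 0 \<le> y' \<and> y' < int n \<and> isB (dd s y y')}"
    by (rule finite_subset[of _ "{0..<int n}"]) auto
  have "(s,y) \<notin> (\<lambda>y'. (\<not>s,y')) ` {y'. 0 \<le> y' \<and> y' < int n \<and> isB (dd s y y')}" by auto
  hence "card L = Suc (card ((\<lambda>y'. (\<not>s,y')) ` {y'. 0 \<le> y' \<and> y' < int n \<and> isB (dd s y y')}))"
    unfolding L_def using finY by simp
  also have "card ((\<lambda>y'. (\<not>s,y')) ` {y'. 0 \<le> y' \<and> y' < int n \<and> isB (dd s y y')}) = card {y'. 0 \<le> y' \<and> y' < int n \<and> isB (dd s y y')}"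
    by (rule card_image) (simp add: inj_on_def)
  also have "\<dots> = card {\<delta>. \<delta> < n \<and> isB \<delta>}" by (rule reparam1)
  also have "{\<delta>. \<delta> < n \<and> isB \<delta>} = {\<delta>. isB \<delta>}" unfolding isB_def by auto
  finally have cL: "card L = 1 + card {\<delta>. isB \<delta>}" by simp
  show ?thesis unfolding eq card_image[OF inj] card_cartesian_product cPF cL ..
qed

end

context ext begin

lemma e_high:
  assumes x: "x \<in> V" and y: "0 \<le> y" "y < int n" and i: "1 \<le> i" "i \<le> m"
  shows "card {(u,w). u \<in> NG (x,s,y) \<and> w \<in> NG (x,s,y) \<and> adjG u w \<and> kap u w = q + i}
     = 2 * (uu i + card (PP x) * ww i)"
proof -
  let ?Y = "{(u,w). u \<in> NG (x,s,y) \<and> w \<in> NG (x,s,y) \<and> adjG u w \<and> kap u w = q + i}"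
  let ?X = "{z \<in> ?Y. fst (snd (fst z)) = s}"
  define \<Psi> where "\<Psi> z \<delta> \<longleftrightarrow> colof \<delta> = i \<and> (isA \<delta> \<and> z = (x,x) \<or> isB \<delta> \<and> z \<in> PP x)" for z :: "'a \<times> 'a" and \<delta>
  define f :: "('a \<times> 'a) \<times> int \<Rightarrow> ('a \<times> bool \<times> int) \<times> ('a \<times> bool \<times> int)"
    where "f = (\<lambda>((x1,x2),y'). ((x1,s,y),(x2,\<not>s,y')))"
  have NFV: "NF x \<subseteq> V" using NF_V[OF x] .
  have sides: "fst (snd u) \<noteq> fst (snd w)" if "(u,w) \<in> ?Y" for u w
  proof
    assume e: "fst (snd u) = fst (snd w)"
    obtain x1 s1 y1 where u: "u = (x1,s1,y1)" by (cases u) auto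
    obtain x2 s2 y2 where w: "w = (x2,s2,y2)" by (cases w) auto
    have "s2 = s1" using e unfolding u w by simp
    have ad: "adjG (x1,s1,y1) (x2,s1,y2)" "kap (x1,s1,y1) (x2,s1,y2) = q + i"
      using that \<open>s2 = s1\<close> unfolding u w by auto
    have "kap (x1,s1,y1) (x2,s1,y2) \<in> {1..q}" by (rule kap_same[OF ad(1)])
    thus False using ad(2) i by simp
  qed
  have Ysym: "(w,u) \<in> ?Y" if "(u,w) \<in> ?Y" for u w
    using that adjG_sym kap_sym[of u w] by auto
  have splitY: "?Y = ?X \<union> (\<lambda>(u,w). (w,u)) ` ?X"
  proof (rule set_eqI)
    fix z :: "('a \<times> bool \<times> int) \<times> ('a \<times> bool \<times> int)"
    obtain u w where z: "z = (u,w)" by (cases z) auto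
    show "z \<in> ?Y \<longleftrightarrow> z \<in> ?X \<union> (\<lambda>(u,w). (w,u)) ` ?X"
    proof
      assume h: "z \<in> ?Y"
      show "z \<in> ?X \<union> (\<lambda>(u,w). (w,u)) ` ?X"
      proof (cases "fst (snd u) = s")
        case True thus ?thesis using h unfolding z by simp
      next
        case False
        have d: "fst (snd u) \<noteq> fst (snd w)" using sides[of u w] h unfolding z by blast
        have "(w,u) \<in> ?Y" using Ysym[of u w] h unfolding z by blast
        moreover have "fst (snd w) = s" using d False by (cases "fst (snd w)"; cases "fst (snd u)"; cases s) auto
        ultimately have "(w,u) \<in> ?X" by simp
        thus ?thesis unfolding z by (intro UnI2 image_eqI[of _ _ "(w,u)"]) auto
      qed
    next
      assume "z \<in> ?X \<union> (\<lambda>(u,w). (w,u)) ` ?X"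
      thus "z \<in> ?Y"
      proof
        assume "z \<in> ?X" thus ?thesis by simp
      next
        assume "z \<in> (\<lambda>(u,w). (w,u)) ` ?X"
        then obtain v where v: "v \<in> ?X" "z = (\<lambda>(u,w). (w,u)) v" by (rule imageE)
        obtain a b where vv: "v = (a,b)" by (cases v) auto
        have "(a,b) \<in> ?Y" using v(1) unfolding vv by simp
        hence "(b,a) \<in> ?Y" by (rule Ysym)
        thus ?thesis using v(2) unfolding vv by simp
      qed
    qed
  qed
  have disj: "?X \<inter> (\<lambda>(u,w). (w,u)) ` ?X = {}"
  proof -
    { fix z assume z1: "z \<in> ?X" and z2: "z \<in> (\<lambda>(u,w). (w,u)) ` ?X"
      obtain u w where z: "z = (u,w)" by (cases z) auto
      have "(w,u) \<in> ?X" using z2 unfolding z by auto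
      hence "fst (snd w) = s" "(u,w) \<in> ?Y" "fst (snd u) = s" using z1 unfolding z by auto
      hence False using sides[of u w] by simp }
    thus ?thesis by blast
  qed
  have finVG2: "finite (VG \<times> VG)" using VG_fin by simp
  have finY: "finite ?Y" by (rule finite_subset[OF _ finVG2]) (auto dest: adjG_VG)
  have finX: "finite ?X" using finY by simp
  have cardsw: "card ((\<lambda>(u,w). (w,u)) ` ?X) = card ?X" by (rule card_image) (auto simp: inj_on_def)
  have cY0: "card ?Y = card (?X \<union> (\<lambda>(u,w). (w,u)) ` ?X)" using arg_cong[where f=card, OF splitY] .
  have finsw: "finite ((\<lambda>(u,w). (w,u)) ` ?X)" using finX by (rule finite_imageI)
  have cY: "card ?Y = 2 * card ?X"
    using cY0 card_Un_disjoint[OF finX finsw disj] cardsw by simp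
  have eqX: "?X = f ` {(z,y'). 0 \<le> y' \<and> y' < int n \<and> \<Psi> z (dd s y y')}"
  proof (rule set_eqI)
    fix z :: "('a \<times> bool \<times> int) \<times> ('a \<times> bool \<times> int)"
    obtain x1 s1 y1 x2 s2 y2 where z: "z = ((x1,s1,y1),(x2,s2,y2))" by (cases z) auto
    show "z \<in> ?X \<longleftrightarrow> z \<in> f ` {(z,y'). 0 \<le> y' \<and> y' < int n \<and> \<Psi> z (dd s y y')}"
    proof
      assume "z \<in> ?X"
      hence h: "(x1,s1,y1) \<in> NG (x,s,y)" "(x2,s2,y2) \<in> NG (x,s,y)" "adjG (x1,s1,y1) (x2,s2,y2)"
          "kap (x1,s1,y1) (x2,s2,y2) = q + i" "s1 = s" "((x1,s1,y1),(x2,s2,y2)) \<in> ?Y" unfolding z by auto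
      have s2: "s2 = (\<not> s)" using sides[OF h(6)] h(5) by auto
      have u1: "y1 = y" "x1 \<in> NF x" using h(1) NG_mem[OF x y, where x'=x1 and s'=s1 and y'=y1] h(5) by auto
      have w1: "0 \<le> y2 \<and> y2 < int n \<and> (isA (dd s y y2) \<and> x2 = x \<or> isB (dd s y y2) \<and> x2 \<in> NF x)"
        using h(2) NG_mem[OF x y, where x'=x2 and s'=s2 and y'=y2] s2 by simp
      have ad: "isA (dd s y y2) \<and> x2 = x1 \<or> isB (dd s y y2) \<and> x2 \<in> NF x1"
        using h(3) unfolding h(5) s2 u1(1) by (simp add: adjG_simp)
      have col: "colof (dd s y y2) = i" using h(4) unfolding h(5) s2 u1(1) by (simp add: kap_simp)
      have "\<Psi> (x1,x2) (dd s y y2)"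
      proof (cases "isA (dd s y y2)")
        case True
        hence "x2 = x" "x2 = x1" using w1 ad isAB by blast+
        thus ?thesis unfolding \<Psi>_def using True col by simp
      next
        case False
        hence "isB (dd s y y2)" "x2 \<in> NF x" "x2 \<in> NF x1" using w1 ad by blast+
        thus ?thesis unfolding \<Psi>_def PP_def using col u1 by simp
      qed
      thus "z \<in> f ` {(z,y'). 0 \<le> y' \<and> y' < int n \<and> \<Psi> z (dd s y y')}"
        unfolding z h(5) s2 u1(1) f_def using w1 by (intro image_eqI[of _ _ "((x1,x2),y2)"]) auto
    next
      assume "z \<in> f ` {(z,y'). 0 \<le> y' \<and> y' < int n \<and> \<Psi> z (dd s y y')}"
      then obtain v where v: "v \<in> {(z,y'). 0 \<le> y' \<and> y' < int n \<and> \<Psi> z (dd s y y')}" "z = f v" by (rule imageE)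
      obtain a1 a2 y' where vv: "v = ((a1,a2),y')" by (cases v) auto
      have ps: "0 \<le> y'" "y' < int n" "\<Psi> (a1,a2) (dd s y y')" using v(1) unfolding vv by auto
      have zz: "z = ((a1,s,y),(a2,\<not>s,y'))" using v(2) unfolding vv f_def by simp
      have col: "colof (dd s y y') = i" using ps(3) unfolding \<Psi>_def by simp
      have c2: "isA (dd s y y') \<and> a1 = x \<and> a2 = x \<or> isB (dd s y y') \<and> a1 \<in> NF x \<and> a2 \<in> NF x \<and> a2 \<in> NF a1"
        using ps(3) unfolding \<Psi>_def PP_def by auto
      have va: "a1 \<in> V" "a2 \<in> V" using c2 NFV x by auto
      have n1: "(a1,s,y) \<in> NG (x,s,y)"
        using NG_mem[OF x y, where x'=a1 and s'=s and y'=y] c2 NF_self by auto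
      have n2: "(a2,\<not>s,y') \<in> NG (x,s,y)"
        using NG_mem[OF x y, where x'=a2 and s'="\<not>s" and y'=y'] c2 ps by auto
      have ad: "adjG (a1,s,y) (a2,\<not>s,y')" using c2 va ps x y by (auto simp: adjG_simp)
      have kp: "kap (a1,s,y) (a2,\<not>s,y') = q + i" using col by (simp add: kap_simp)
      show "z \<in> ?X" unfolding zz using n1 n2 ad kp by simp
    qed
  qed
  have injf: "inj_on f {(z,y'). 0 \<le> y' \<and> y' < int n \<and> \<Psi> z (dd s y y')}"
    unfolding f_def by (rule inj_onI) auto
  have "card ?X = card {(z,y'). 0 \<le> y' \<and> y' < int n \<and> \<Psi> z (dd s y y')}"
    unfolding eqX by (rule card_image[OF injf])
  also have "\<dots> = card {(z,\<delta>). \<delta> < n \<and> \<Psi> z \<delta>}" by (rule reparam)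
  also have "{(z,\<delta>). \<delta> < n \<and> \<Psi> z \<delta>} = {(x,x)} \<times> {\<delta>. isA \<delta> \<and> colof \<delta> = i} \<union> PP x \<times> {\<delta>. isB \<delta> \<and> colof \<delta> = i}"
    unfolding \<Psi>_def isA_def isB_def by auto
  also have "card \<dots> = card ({(x,x)} \<times> {\<delta>. isA \<delta> \<and> colof \<delta> = i}) + card (PP x \<times> {\<delta>. isB \<delta> \<and> colof \<delta> = i})"
  proof (rule card_Un_disjoint)
    have finNF: "finite (NF x)" using NFV Vfin finite_subset by blast
    have finPP: "finite (PP x)" by (rule finite_subset[of _ "NF x \<times> NF x"]) (use finNF in \<open>auto simp: PP_def\<close>)
    show "finite ({(x,x)} \<times> {\<delta>. isA \<delta> \<and> colof \<delta> = i})"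
      by (rule finite_cartesian_product) (auto intro: finite_subset[of _ "{..<n}"] simp: isA_def)
    show "finite (PP x \<times> {\<delta>. isB \<delta> \<and> colof \<delta> = i})"
      by (rule finite_cartesian_product) (auto intro: finite_subset[of _ "{..<n}"] finPP simp: isB_def)
    show "{(x,x)} \<times> {\<delta>. isA \<delta> \<and> colof \<delta> = i} \<inter> PP x \<times> {\<delta>. isB \<delta> \<and> colof \<delta> = i} = {}"
      using isAB by blast
  qed
  also have "\<dots> = uu i + card (PP x) * ww i"
    using card_A[OF i] card_B[OF i] by (simp add: card_cartesian_product)
  finally show ?thesis using cY by simp
qed

end

context ext begin

definition aa where "aa j = (if j \<le> q then a j else d * (W + m) + (j - q))"

lemma uw_deg: "1 \<le> i \<Longrightarrow> i \<le> m \<Longrightarrow> uu i + d * ww i = d * (W + m) + i"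
proof -
  assume i: "1 \<le> i" "i \<le> m"
  have "W + m = (W + m - i) + i" using i by simp
  hence "d * (W + m) = d * (W + m - i) + d * i" by (metis add_mult_distrib2)
  thus ?thesis unfolding uu_def ww_def t_def by (simp add: algebra_simps)
qed

lemma SD_pos: "1 \<le> SD"
proof -
  have "D (Suc 1) < D 1" using Dmono[of 1] q1 by simp
  hence "1 \<le> D 1" by simp
  moreover have "D 1 \<le> SD" unfolding SD_def using q1 by (intro member_le_sum) auto
  ultimately show ?thesis by simp
qed

lemma d_gt_a: "j \<in> {1..q} \<Longrightarrow> a j < d"
proof -
  assume j: "j \<in> {1..q}"
  have "a j \<le> (\<Sum>j=1..q. a j)" using j by (intro member_le_sum) auto
  thus ?thesis unfolding d_def by simp
qed

lemma colours: "e \<in> EG \<Longrightarrow> cG e \<in> {1..q+m}"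
proof -
  assume "e \<in> EG"
  then obtain u w where e: "e = {u,w}" "adjG u w" using EG_edge by blast
  have "u \<noteq> w" using e(2) adjG_irr by blast
  hence ce: "cG e = kap u w" using cG_eq e(1) by simp
  obtain x1 s1 y1 where u: "u = (x1,s1,y1)" by (cases u) auto
  obtain x2 s2 y2 where w: "w = (x2,s2,y2)" by (cases w) auto
  show ?thesis
  proof (cases "s1 = s2")
    case True
    have "kap u w \<in> {1..q}" using kap_same e(2) unfolding u w True by blast
    thus ?thesis using ce by auto
  next
    case False
    have "kap u w = q + colof (dd s1 y1 y2)" unfolding u w using kap_diff[OF False] .
    moreover have "colof (dd s1 y1 y2) \<in> {1..m}" using colof_range dd_lt by blast
    ultimately show ?thesis using ce by auto
  qed
qed

lemma degs: "v \<in> VG \<Longrightarrow> j \<in> {1..q+m} \<Longrightarrow> deg_col EG cG j v = aa j"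
proof -
  assume v: "v \<in> VG" and j: "j \<in> {1..q+m}"
  obtain x s y where vv: "v = (x,s,y)" by (cases v) auto
  have x: "x \<in> V" and y: "0 \<le> y" "y < int n" using v unfolding vv by auto
  show ?thesis
  proof (cases "j \<le> q")
    case True
    thus ?thesis unfolding deg_G vv aa_def using deg_low[OF x y] j by auto
  next
    case False
    define i where "i = j - q"
    have i: "1 \<le> i" "i \<le> m" "j = q + i" using False j unfolding i_def by auto
    show ?thesis unfolding deg_G vv aa_def using deg_high[OF x y i(1,2)] uw_deg[OF i(1,2)] i False by simp
  qed
qed

lemma e_low_val: "v \<in> VG \<Longrightarrow> j \<in> {1..q} \<Longrightarrow> e_col EG cG j v = D j * (1 + card {\<delta>. isB \<delta>})"
proof -
  assume v: "v \<in> VG" and j: "j \<in> {1..q}"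
  obtain x s y where vv: "v = (x,s,y)" by (cases v) auto
  have x: "x \<in> V" and y: "0 \<le> y" "y < int n" using v unfolding vv by auto
  have "2 * e_col EG cG j v = 2 * D j * (1 + card {\<delta>. isB \<delta>})"
    unfolding e_G vv using e_low[OF x y j] .
  thus ?thesis by simp
qed

lemma e_high_val: "v \<in> VG \<Longrightarrow> 1 \<le> i \<Longrightarrow> i \<le> m \<Longrightarrow> e_col EG cG (q + i) v = uu i + (d + 2 * SD) * ww i"
proof -
  assume v: "v \<in> VG" and i: "1 \<le> i" "i \<le> m"
  obtain x s y where vv: "v = (x,s,y)" by (cases v) auto
  have x: "x \<in> V" and y: "0 \<le> y" "y < int n" using v unfolding vv by auto
  have "2 * e_col EG cG (q + i) v = 2 * (uu i + card (PP x) * ww i)"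
    unfolding e_G vv using e_high[OF x y i] .
  thus ?thesis using card_PP[OF x] by simp
qed

lemma Bb_ge: "m * W \<le> card {\<delta>. isB \<delta>}"
proof -
  have "m * W = (\<Sum>i=1..m. W)" by simp
  also have "\<dots> \<le> (\<Sum>i=1..m. ww i)" unfolding ww_def by (intro sum_mono) auto
  finally show ?thesis using card_Ball by simp
qed

lemma G_flip:
  assumes big: "d + 2 * SD < D q * m" and Wbig: "t + (d + 2 * SD) * m < W"
  shows "flip_graph VG EG cG (q + m) aa"
  unfolding flip_graph_def
proof (intro conjI)
  show "simple_graph VG EG" by (rule sgG)
  obtain x0 where x0: "x0 \<in> V" using Vne by blast
  hence "(x0, True, 0) \<in> VG" using n_pos by simp
  thus "VG \<noteq> {}" by blast
  show "\<forall>j\<in>{1..q + m}. 0 < aa j" unfolding aa_def using apos by auto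
  show "\<forall>i j. 1 \<le> i \<and> i < j \<and> j \<le> q + m \<longrightarrow> aa i < aa j"
  proof (intro allI impI)
    fix i j assume h: "1 \<le> i \<and> i < j \<and> j \<le> q + m"
    show "aa i < aa j"
    proof (cases "j \<le> q")
      case True thus ?thesis unfolding aa_def using amono h by auto
    next
      case False
      show ?thesis
      proof (cases "i \<le> q")
        case True
        have "a i < d" using d_gt_a True h by auto
        also have "d \<le> d * (W + m)" using W1 by simp
        finally show ?thesis unfolding aa_def using True False by simp
      next
        case False2: False
        have "aa i = d * (W + m) + (i - q)" unfolding aa_def using False2 by simp
        moreover have "aa j = d * (W + m) + (j - q)" unfolding aa_def using False by simp
        moreover have "i - q < j - q" using False2 h by linarith
        ultimately show ?thesis by linarith
      qed
    qed
  qed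
  show "\<forall>e\<in>EG. cG e \<in> {1..q + m}" using colours by blast
  show "\<forall>v\<in>VG. \<forall>j\<in>{1..q + m}. deg_col EG cG j v = aa j" using degs by blast
  show "\<forall>v\<in>VG. card {e \<in> EG. v \<in> e} = (\<Sum>j=1..q + m. aa j)"
  proof
    fix v assume v: "v \<in> VG"
    have "card {e \<in> EG. v \<in> e} = (\<Sum>j=1..q + m. card {e \<in> {e \<in> EG. v \<in> e}. cG e = j})"
      by (rule card_colour_sum) (use sg_finE[OF sgG] colours in auto)
    also have "\<dots> = (\<Sum>j=1..q + m. aa j)"
    proof (rule sum.cong)
      fix j assume j: "j \<in> {1..q + m}"
      have "card {e \<in> {e \<in> EG. v \<in> e}. cG e = j} = deg_col EG cG j v" unfolding deg_col_def
        by (rule arg_cong[where f=card]) auto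
      thus "card {e \<in> {e \<in> EG. v \<in> e}. cG e = j} = aa j" using degs[OF v j] by simp
    qed simp
    finally show "card {e \<in> EG. v \<in> e} = (\<Sum>j=1..q + m. aa j)" .
  qed
  show "\<forall>v\<in>VG. \<forall>j. 1 \<le> j \<and> j < q + m \<longrightarrow> e_col EG cG (Suc j) v < e_col EG cG j v"
  proof (intro ballI allI impI)
    fix v j assume v: "v \<in> VG" and j: "1 \<le> j \<and> j < q + m"
    define Bb where "Bb = card {\<delta>. isB \<delta>}"
    define Pc where "Pc = d + 2 * SD"
    show "e_col EG cG (Suc j) v < e_col EG cG j v"
    proof (cases "Suc j \<le> q")
      case True
      have "e_col EG cG (Suc j) v = D (Suc j) * (1 + Bb)" unfolding Bb_def using e_low_val[OF v] True by simp
      moreover have "e_col EG cG j v = D j * (1 + Bb)" unfolding Bb_def using e_low_val[OF v] True j by simp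
      moreover have "D (Suc j) < D j" using Dmono j True by simp
      hence "D (Suc j) * (1 + Bb) < D j * (1 + Bb)" by (rule mult_strict_right_mono) simp
      ultimately show ?thesis by metis
    next
      case False
      show ?thesis
      proof (cases "j = q")
        case True
        have e1: "e_col EG cG (Suc j) v = t + Pc * (W + m - 1)"
          using e_high_val[OF v, of 1] m1 True unfolding Pc_def uu_def ww_def by simp
        have e0: "e_col EG cG j v = D q * (1 + Bb)" unfolding Bb_def using e_low_val[OF v] True q1 by simp
        have "Pc * (W + m - 1) \<le> Pc * (W + m)" by simp
        also have "\<dots> = Pc * W + Pc * m" by (simp add: algebra_simps)
        finally have "t + Pc * (W + m - 1) < Pc * W + W" using Wbig unfolding Pc_def by (simp add: mult.commute)
        also have "\<dots> = (Pc + 1) * W" by simp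
        also have "\<dots> \<le> (D q * m) * W" using big unfolding Pc_def by (intro mult_right_mono) auto
        also have "\<dots> = D q * (m * W)" by simp
        also have "\<dots> \<le> D q * Bb" using Bb_ge unfolding Bb_def by (intro mult_left_mono) auto
        also have "\<dots> \<le> D q * (1 + Bb)" by simp
        finally show ?thesis using e0 e1 by simp
      next
        case False2: False
        define i where "i = j - q"
        have i: "1 \<le> i" "i < m" "j = q + i" using False False2 j unfolding i_def by auto
        have e1: "e_col EG cG (Suc j) v = uu (i+1) + Pc * ww (i+1)"
          using e_high_val[OF v, of "i+1"] i unfolding Pc_def by simp
        have e0: "e_col EG cG j v = uu i + Pc * ww i"
          using e_high_val[OF v, of i] i unfolding Pc_def by simp
        have w: "ww i = ww (i+1) + 1" unfolding ww_def using i by simp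
        have u: "uu (i+1) = uu i + t" unfolding uu_def by simp
        have "t < Pc" unfolding Pc_def t_def using SD_pos by simp
        thus ?thesis using e0 e1 w u by (simp add: algebra_simps)
      qed
    qed
  qed
qed

end


lemma flip_transfer:
  fixes f :: "'a \<Rightarrow> 'b"
  assumes F: "flip_graph V E c k a" and inj: "inj_on f V"
  shows "flip_graph (f ` V) (image f ` E) (\<lambda>e. c (inv_into V f ` e)) k a"
proof -
  let ?E' = "image f ` E"
  let ?c' = "\<lambda>e. c (inv_into V f ` e)"
  have sg: "simple_graph V E" using F unfolding flip_graph_def by (elim conjE)
  have EV: "E \<subseteq> Pow V"
  proof
    fix e assume "e \<in> E"
    then obtain u v where "u \<in> V" "v \<in> V" "e = {u,v}" using sg_edge[OF sg] by meson
    thus "e \<in> Pow V" by simp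
  qed
  have Vfin: "finite V" using sg unfolding simple_graph_def by (elim conjE)
  have c'eq: "?c' (f ` e) = c e" if "e \<in> E" for e
  proof -
    have "e \<subseteq> V" using that EV by blast
    thus ?thesis using inv_into_image_cancel[OF inj] by simp
  qed
  have injP: "inj_on (image f) (Pow V)" by (rule inj_on_image_Pow[OF inj])
  have injE: "inj_on (image f) E" using inj_on_subset[OF injP EV] .
  have mem: "f v \<in> f ` e \<longleftrightarrow> v \<in> e" if "e \<subseteq> V" "v \<in> V" for e v
    using inj_on_image_mem_iff[OF inj that(2) that(1)] .
  have sub: "f ` e \<subseteq> f ` S \<longleftrightarrow> e \<subseteq> S" if "e \<subseteq> V" "S \<subseteq> V" for e S
  proof
    assume h: "f ` e \<subseteq> f ` S"
    show "e \<subseteq> S"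
    proof
      fix x assume "x \<in> e"
      hence "f x \<in> f ` S" using h by blast
      thus "x \<in> S" using inj_on_image_mem_iff[OF inj _ that(2)] \<open>x \<in> e\<close> that(1) by blast
    qed
  qed (rule image_mono)
  have edge': "{f u, f v} \<in> ?E' \<longleftrightarrow> {u,v} \<in> E" if "u \<in> V" "v \<in> V" for u v
  proof -
    have eq: "{f u, f v} = f ` {u,v}" by simp
    have "{u,v} \<in> Pow V" using that by simp
    hence "f ` {u,v} \<in> image f ` E \<longleftrightarrow> {u,v} \<in> E" by (rule inj_on_image_mem_iff[OF injP _ EV])
    thus ?thesis unfolding eq .
  qed
  have E'V: "e' \<in> ?E' \<Longrightarrow> e' \<subseteq> f ` V" for e' using EV by blast
  have nb: "closed_nbhd ?E' (f v) = f ` closed_nbhd E v" if v: "v \<in> V" for v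
  proof -
    have "{u'. {u', f v} \<in> ?E'} = f ` {u. {u,v} \<in> E}"
    proof (rule set_eqI)
      fix u'
      show "u' \<in> {u'. {u', f v} \<in> ?E'} \<longleftrightarrow> u' \<in> f ` {u. {u,v} \<in> E}"
      proof
        assume "u' \<in> {u'. {u', f v} \<in> ?E'}"
        hence h: "{u', f v} \<in> ?E'" by simp
        hence "u' \<in> f ` V" using E'V by blast
        then obtain u where u: "u \<in> V" "u' = f u" by blast
        hence "{u,v} \<in> E" using h edge'[OF u(1) v] by simp
        thus "u' \<in> f ` {u. {u,v} \<in> E}" using u by blast
      next
        assume "u' \<in> f ` {u. {u,v} \<in> E}"
        then obtain u where u: "{u,v} \<in> E" "u' = f u" by blast
        have "u \<in> V" using sg_vert[OF sg u(1)] by simp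
        thus "u' \<in> {u'. {u', f v} \<in> ?E'}" using edge'[OF _ v] u by simp
      qed
    qed
    thus ?thesis unfolding closed_nbhd_def by simp
  qed
  have NV: "closed_nbhd E v \<subseteq> V" if "v \<in> V" for v
    unfolding closed_nbhd_def using that sg_vert[OF sg] by blast
  have degeq: "{e' \<in> ?E'. f v \<in> e' \<and> ?c' e' = j} = image f ` {e \<in> E. v \<in> e \<and> c e = j}" if v: "v \<in> V" for v j
  proof (rule set_eqI)
    fix e'
    show "e' \<in> {e' \<in> ?E'. f v \<in> e' \<and> ?c' e' = j} \<longleftrightarrow> e' \<in> image f ` {e \<in> E. v \<in> e \<and> c e = j}"
    proof
      assume "e' \<in> {e' \<in> ?E'. f v \<in> e' \<and> ?c' e' = j}"
      then obtain e where e: "e \<in> E" "e' = f ` e" "f v \<in> f ` e" "?c' (f ` e) = j" by blast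
      have "v \<in> e" using e(3) mem[of e v] e(1) EV v by blast
      moreover have "c e = j" using e(4) c'eq[OF e(1)] by simp
      ultimately show "e' \<in> image f ` {e \<in> E. v \<in> e \<and> c e = j}" using e by blast
    next
      assume "e' \<in> image f ` {e \<in> E. v \<in> e \<and> c e = j}"
      then obtain e where e: "e \<in> E" "e' = f ` e" "v \<in> e" "c e = j" by blast
      thus "e' \<in> {e' \<in> ?E'. f v \<in> e' \<and> ?c' e' = j}" using c'eq[OF e(1)] by auto
    qed
  qed
  have toteq: "{e' \<in> ?E'. f v \<in> e'} = image f ` {e \<in> E. v \<in> e}" if v: "v \<in> V" for v
  proof (rule set_eqI)
    fix e'
    show "e' \<in> {e' \<in> ?E'. f v \<in> e'} \<longleftrightarrow> e' \<in> image f ` {e \<in> E. v \<in> e}"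
    proof
      assume "e' \<in> {e' \<in> ?E'. f v \<in> e'}"
      then obtain e where e: "e \<in> E" "e' = f ` e" "f v \<in> f ` e" by blast
      have "v \<in> e" using e(3) mem[of e v] e(1) EV v by blast
      thus "e' \<in> image f ` {e \<in> E. v \<in> e}" using e by blast
    qed auto
  qed
  have eeq: "{e' \<in> ?E'. e' \<subseteq> closed_nbhd ?E' (f v) \<and> ?c' e' = j} = image f ` {e \<in> E. e \<subseteq> closed_nbhd E v \<and> c e = j}"
    if v: "v \<in> V" for v j
  proof (rule set_eqI)
    fix e'
    show "e' \<in> {e' \<in> ?E'. e' \<subseteq> closed_nbhd ?E' (f v) \<and> ?c' e' = j} \<longleftrightarrow> e' \<in> image f ` {e \<in> E. e \<subseteq> closed_nbhd E v \<and> c e = j}"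
    proof
      assume "e' \<in> {e' \<in> ?E'. e' \<subseteq> closed_nbhd ?E' (f v) \<and> ?c' e' = j}"
      then obtain e where e: "e \<in> E" "e' = f ` e" "f ` e \<subseteq> f ` closed_nbhd E v" "?c' (f ` e) = j"
        using nb[OF v] by blast
      have "e \<subseteq> closed_nbhd E v" using e(3) sub[of e "closed_nbhd E v"] e(1) EV NV[OF v] by blast
      moreover have "c e = j" using e(4) c'eq[OF e(1)] by simp
      ultimately show "e' \<in> image f ` {e \<in> E. e \<subseteq> closed_nbhd E v \<and> c e = j}" using e by blast
    next
      assume "e' \<in> image f ` {e \<in> E. e \<subseteq> closed_nbhd E v \<and> c e = j}"
      then obtain e where e: "e \<in> E" "e' = f ` e" "e \<subseteq> closed_nbhd E v" "c e = j" by blast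
      thus "e' \<in> {e' \<in> ?E'. e' \<subseteq> closed_nbhd ?E' (f v) \<and> ?c' e' = j}"
        using c'eq[OF e(1)] nb[OF v] by auto
    qed
  qed
  have cimg: "card (image f ` S) = card S" if "S \<subseteq> E" for S
    using card_image[OF inj_on_subset[OF injE that]] .
  have F': "simple_graph V E \<and> V \<noteq> {} \<and>
     (\<forall>j\<in>{1..k}. 0 < a j) \<and>
     (\<forall>i j. 1 \<le> i \<and> i < j \<and> j \<le> k \<longrightarrow> a i < a j) \<and>
     (\<forall>e\<in>E. c e \<in> {1..k}) \<and>
     (\<forall>v\<in>V. card {e \<in> E. v \<in> e} = (\<Sum>j=1..k. a j)) \<and>
     (\<forall>v\<in>V. \<forall>j\<in>{1..k}. deg_col E c j v = a j) \<and>
     (\<forall>v\<in>V. \<forall>j. 1 \<le> j \<and> j < k \<longrightarrow> e_col E c (Suc j) v < e_col E c j v)"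
    using F unfolding flip_graph_def .
  show ?thesis unfolding flip_graph_def
  proof (intro conjI)
    show "simple_graph (f ` V) ?E'" unfolding simple_graph_def
    proof (intro conjI ballI)
      show "finite (f ` V)" using Vfin by simp
      fix e' assume "e' \<in> ?E'"
      then obtain e where e: "e \<in> E" "e' = f ` e" by blast
      then obtain u v where uv: "u \<noteq> v" "u \<in> V" "v \<in> V" "e = {u,v}" using sg_edge[OF sg] by meson
      have "f u \<noteq> f v" using uv inj unfolding inj_on_def by blast
      thus "\<exists>u v. u \<noteq> v \<and> u \<in> f ` V \<and> v \<in> f ` V \<and> e' = {u, v}" using uv e by blast
    qed
    show "f ` V \<noteq> {}" using F' by simp
    show "\<forall>j\<in>{1..k}. 0 < a j" using F' by (elim conjE)
    show "\<forall>i j. 1 \<le> i \<and> i < j \<and> j \<le> k \<longrightarrow> a i < a j" using F' by (elim conjE)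
    show "\<forall>e\<in>?E'. ?c' e \<in> {1..k}" using F' c'eq by auto
    show "\<forall>v\<in>f ` V. card {e \<in> ?E'. v \<in> e} = (\<Sum>j = 1..k. a j)"
    proof
      fix v' assume "v' \<in> f ` V"
      then obtain v where v: "v \<in> V" "v' = f v" by blast
      have "card {e \<in> ?E'. v' \<in> e} = card {e \<in> E. v \<in> e}" unfolding v(2) toteq[OF v(1)] by (rule cimg) blast
      thus "card {e \<in> ?E'. v' \<in> e} = (\<Sum>j = 1..k. a j)" using F' v(1) by simp
    qed
    show "\<forall>v\<in>f ` V. \<forall>j\<in>{1..k}. deg_col ?E' ?c' j v = a j"
    proof (intro ballI)
      fix v' j assume "v' \<in> f ` V" "j \<in> {1..k}"
      then obtain v where v: "v \<in> V" "v' = f v" by blast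
      have "deg_col ?E' ?c' j v' = deg_col E c j v" unfolding deg_col_def v(2) degeq[OF v(1)] by (rule cimg) blast
      thus "deg_col ?E' ?c' j v' = a j" using F' v(1) \<open>j \<in> {1..k}\<close> by simp
    qed
    show "\<forall>v\<in>f ` V. \<forall>j. 1 \<le> j \<and> j < k \<longrightarrow> e_col ?E' ?c' (Suc j) v < e_col ?E' ?c' j v"
    proof (intro ballI allI impI)
      fix v' j assume "v' \<in> f ` V" "1 \<le> j \<and> j < k"
      then obtain v where v: "v \<in> V" "v' = f v" by blast
      have "e_col ?E' ?c' j v' = e_col E c j v" for j unfolding e_col_def v(2) eeq[OF v(1)] by (rule cimg) blast
      thus "e_col ?E' ?c' (Suc j) v' < e_col ?E' ?c' j v'" using F' v(1) \<open>1 \<le> j \<and> j < k\<close> by simp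
    qed
  qed
qed


context ext begin

lemma G_flip':
  assumes h1: "1 + (\<Sum>j=1..q. a j) + 2 * (\<Sum>j=1..q. D j) < D q * m"
    and h2: "(2 + (\<Sum>j=1..q. a j)) + (1 + (\<Sum>j=1..q. a j) + 2 * (\<Sum>j=1..q. D j)) * m < W"
  shows "\<exists>(V' :: nat set) E' c' a'. (\<forall>j\<in>{1..q}. a' j = a j) \<and> a' (q + m) \<ge> W \<and> flip_graph V' E' c' (q + m) a'"
proof -
  have big: "d + 2 * SD < D q * m" using h1 unfolding d_def SD_def .
  have Wbig: "t + (d + 2 * SD) * m < W" using h2 unfolding t_def d_def SD_def by simp
  have FG: "flip_graph VG EG cG (q + m) aa" by (rule G_flip[OF big Wbig])
  obtain f :: "'a \<times> bool \<times> int \<Rightarrow> nat" and N where "f ` VG = {i. i < N}" "inj_on f VG"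
    using finite_imp_inj_to_nat_seg[OF VG_fin] by blast
  have FG': "flip_graph (f ` VG) (image f ` EG) (\<lambda>e. cG (inv_into VG f ` e)) (q + m) aa"
    by (rule flip_transfer[OF FG \<open>inj_on f VG\<close>])
  have "\<forall>j\<in>{1..q}. aa j = a j" unfolding aa_def by simp
  moreover have "aa (q + m) \<ge> W"
  proof -
    have "W \<le> d * (W + m)" unfolding d_def by simp
    thus ?thesis unfolding aa_def using m1 by simp
  qed
  ultimately show ?thesis using FG' by blast
qed

end

lemma deg_le_e:
  assumes sg: "simple_graph V E" and v: "v \<in> V"
  shows "deg_col E c j v \<le> e_col E c j v"
proof -
  have "{e \<in> E. v \<in> e \<and> c e = j} \<subseteq> {e \<in> E. e \<subseteq> closed_nbhd E v \<and> c e = j}"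
  proof
    fix e assume e: "e \<in> {e \<in> E. v \<in> e \<and> c e = j}"
    then obtain a b where ab: "e = {a,b}" using sg_edge[OF sg] by blast
    have "e \<subseteq> closed_nbhd E v"
    proof (cases "v = a")
      case True thus ?thesis using e ab unfolding closed_nbhd_def by (auto simp: insert_commute)
    next
      case False
      hence "v = b" using e ab by auto
      thus ?thesis using e ab unfolding closed_nbhd_def by auto
    qed
    thus "e \<in> {e \<in> E. e \<subseteq> closed_nbhd E v \<and> c e = j}" using e by simp
  qed
  moreover have "finite {e \<in> E. e \<subseteq> closed_nbhd E v \<and> c e = j}" using sg_finE[OF sg] by simp
  ultimately show ?thesis unfolding deg_col_def e_col_def by (rule card_mono[rotated])
qed

lemma sumD:
  fixes D :: "nat \<Rightarrow> nat" and \<xi> :: int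
  assumes xi: "\<forall>j. 1 \<le> j \<and> j < q \<longrightarrow> int (D j) - int (D (Suc j)) \<le> \<xi>"
  shows "r \<le> q \<Longrightarrow> 2 * (\<Sum>j=1..r. int (D j)) \<le> 2 * int r * int (D r) + \<xi> * int r * (int r - 1)"
proof (induction r)
  case 0 thus ?case by simp
next
  case (Suc r)
  have IH: "2 * (\<Sum>j=1..r. int (D j)) \<le> 2 * int r * int (D r) + \<xi> * int r * (int r - 1)"
    using Suc by simp
  have s: "(\<Sum>j=1..Suc r. int (D j)) = (\<Sum>j=1..r. int (D j)) + int (D (Suc r))" by simp
  show ?case
  proof (cases "r = 0")
    case True thus ?thesis by simp
  next
    case False
    have "1 \<le> r \<and> r < q" using False Suc.prems by simp
    hence "int (D r) - int (D (Suc r)) \<le> \<xi>" using xi by blast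
    hence "int (D r) \<le> int (D (Suc r)) + \<xi>" by simp
    hence f: "2 * int r * int (D r) \<le> 2 * int r * (int (D (Suc r)) + \<xi>)" by (rule mult_left_mono) simp
    have "2 * (\<Sum>j=1..Suc r. int (D j)) \<le> 2 * int r * (int (D (Suc r)) + \<xi>) + \<xi> * int r * (int r - 1) + 2 * int (D (Suc r))"
      using IH f s by linarith
    also have "\<dots> = 2 * int (Suc r) * int (D (Suc r)) + \<xi> * int (Suc r) * (int (Suc r) - 1)"
      by (simp add: algebra_simps)
    finally show ?thesis .
  qed
qed


theorem lemma4p4:
  fixes q k :: nat and D a :: "nat \<Rightarrow> nat"
    and V :: "'a set" and E :: "'a set set" and c :: "'a set \<Rightarrow> nat"
  assumes "1 < q" and "4 * q < k"
    and "int (D q) * (int k - 4 * int q) >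
           1 + Max {int (D j) - int (D (Suc j)) | j. 1 \<le> j \<and> j < q} * int q * (int q - 1)
             + 5 * int ((k - q) choose 2)"
    and "flip_graph V E c q a"
    and "\<forall>v\<in>V. \<forall>j\<in>{1..q}. e_col E c j v = D j"
  shows "\<forall>N::nat. \<exists>(V' :: nat set) E' c' a'.
           (\<forall>j\<in>{1..q}. a' j = a j) \<and> a' k > N \<and> flip_graph V' E' c' k a'"
proof
  fix N :: nat
  note q1 = assms(1) and qk = assms(2) and hyp = assms(3) and F = assms(4) and eD = assms(5)
  have sg: "simple_graph V E" using F unfolding flip_graph_def by (elim conjE)
  have "V \<noteq> {}" using F unfolding flip_graph_def by (elim conjE)
  then obtain x0 where x0: "x0 \<in> V" by blast
  have amono: "\<forall>i j. 1 \<le> i \<and> i < j \<and> j \<le> q \<longrightarrow> a i < a j" using F unfolding flip_graph_def by (elim conjE)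
  have degF: "\<forall>v\<in>V. \<forall>j\<in>{1..q}. deg_col E c j v = a j" using F unfolding flip_graph_def by (elim conjE)
  define m where "m = k - q"
  have m1: "1 \<le> m" and km: "k = q + m" using qk unfolding m_def by auto
  define S where "S = {int (D j) - int (D (Suc j)) | j. 1 \<le> j \<and> j < q}"
  define xi where "xi = Max S"
  have Seq: "S = (\<lambda>j. int (D j) - int (D (Suc j))) ` {1..<q}" unfolding S_def by auto
  have finS: "finite S" unfolding Seq by simp
  have xi_ge: "\<forall>j. 1 \<le> j \<and> j < q \<longrightarrow> int (D j) - int (D (Suc j)) \<le> xi"
  proof (intro allI impI)
    fix j assume "1 \<le> j \<and> j < q"
    hence "int (D j) - int (D (Suc j)) \<in> S" unfolding S_def by blast
    thus "int (D j) - int (D (Suc j)) \<le> xi" unfolding xi_def using finS by simp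
  qed
  have sD: "2 * (\<Sum>j=1..q. int (D j)) \<le> 2 * int q * int (D q) + xi * int q * (int q - 1)"
    using sumD[OF xi_ge] by simp
  have aq: "a q \<le> D q"
  proof -
    have "a q = deg_col E c q x0" using degF x0 q1 by simp
    also have "\<dots> \<le> e_col E c q x0" by (rule deg_le_e[OF sg x0])
    also have "\<dots> = D q" using eD x0 q1 by simp
    finally show ?thesis .
  qed
  have aD: "a j \<le> D q" if "j \<in> {1..q}" for j
  proof (cases "j = q")
    case True thus ?thesis using aq by simp
  next
    case False
    hence "a j < a q" using amono that by auto
    thus ?thesis using aq by simp
  qed
  have sa: "(\<Sum>j=1..q. a j) \<le> q * D q"
  proof -
    have "(\<Sum>j=1..q. a j) \<le> (\<Sum>j=1..q. D q)" by (rule sum_mono) (use aD in auto)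
    thus ?thesis by simp
  qed
  define A where "A = (\<Sum>j=1..q. a j)"
  define SS where "SS = (\<Sum>j=1..q. D j)"
  have sD': "2 * int SS \<le> 2 * int q * int (D q) + xi * int q * (int q - 1)"
    using sD unfolding SS_def by (simp add: of_nat_sum)
  have sa0: "int A \<le> int (q * D q)" using sa unfolding A_def of_nat_le_iff .
  have sa': "int A \<le> int q * int (D q)" using sa0 by simp
  have hyp': "int (D q) * (int m - 3 * int q) > 1 + xi * int q * (int q - 1)"
  proof -
    have eqk: "int k - 4 * int q = int m - 3 * int q" using km by simp
    have h: "1 + xi * int q * (int q - 1) + 5 * int ((k - q) choose 2) < int (D q) * (int m - 3 * int q)"
      using hyp unfolding eqk xi_def S_def .
    moreover have "0 \<le> 5 * int ((k - q) choose 2)" by simp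
    ultimately show ?thesis by linarith
  qed
  have e1: "int (D q) * (int m - 3 * int q) = int (D q) * int m - 3 * (int q * int (D q))"
    by (simp add: algebra_simps)
  have h1i: "1 + int A + 2 * int SS < int (D q) * int m" using hyp' e1 sD' sa' by linarith
  have h1: "1 + A + 2 * SS < D q * m"
  proof -
    have "int (1 + A + 2 * SS) < int (D q * m)" using h1i by simp
    thus ?thesis by (simp only: of_nat_less_iff)
  qed
  define W where "W = (2 + A) + (1 + A + 2 * SS) * m + N + 1"
  have h2: "(2 + A) + (1 + A + 2 * SS) * m < W" unfolding W_def by simp
  have ex: "ext V E c q a D m W"
    by (rule ext.intro) (use F eD q1 m1 in \<open>auto simp: W_def\<close>)
  obtain V' :: "nat set" and E' c' a' where r: "\<forall>j\<in>{1..q}. a' j = a j" "a' (q + m) \<ge> W" "flip_graph V' E' c' (q + m) a'"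
    using ext.G_flip'[OF ex h1[unfolded A_def SS_def] h2[unfolded A_def SS_def]] by blast
  have "a' k > N" using r(2) unfolding km W_def by simp
  thus "\<exists>(V' :: nat set) E' c' a'. (\<forall>j\<in>{1..q}. a' j = a j) \<and> a' k > N \<and> flip_graph V' E' c' k a'"
    using r unfolding km by blast
qed


end
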